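(* Let $X$ be a Banach space, $A$ a sectorial operator on $X$ generating the analytic semigroup $(T_t)_{t\ge0}$, $B$ a closed linear operator with $\mathrm D(A)\subseteq\mathrm D(B)$ and $B\mathrm D(A)\subseteq \mathrm D(A)$. Assume the generalized nested commutators $\{B,A^m\}$ are defined for all $m\in\mathbb Z_+$, satisfy $\{B,A^m\}\mathrm{D}(A)\subseteq\mathrm{D}(A)$, and that there are $\eta>0$, $K_1>0$ with $\|\{B,A^{m}\}R_{A}(\lambda)\|\le K_1\eta^m/|\lambda-a|$ for all $m\in\mathbb Z_+$, $\lambda\in\Sigma_{a,\phi}$. Let $\{\tau_k\}_{k\ge0}$ be an increasing sequence with $\tau_k\to\infty$ satisfying the averaged dwell-time condition: there are $\theta>0$ and $\chi_{\max}\in[0,\theta)$ with $|\tau_k-\tau_0-k\theta|\le\chi_{\max}$ for all $k\in\mathbb Z_+$; set $\chi_k:=\tau_k-\tau_0-k\theta$. Assume further that $\{B,A^m\}T_{\theta-\chi_{\max}}\in L(X)$ for all $m\in\mathbb Z_+$ and $$2e\,\chi_{\max}\,\limsup_{m\to\infty}\frac{\|\{B,A^m\}T_{\theta-\chi_{\max}}\|^{1/m}}{m}<1.$$ Consider the impulsive system $$\dot x(t)=Ax(t),\ t\ne\tau_k,\quad x(\tau_0^+)=x_0\in\mathrm D(A),\qquad x(t^+)=Bx(t),\ t=\tau_k\ (k\ge1),\tag{S}$$ and the comparison system $$\dot z(t)=Az(t),\ t\ne k\theta,\quad z(0^+)=z_0\in\mathrm D(A),\qquad z(t^+)=Bz(t)+\sum_{m=1}^{\infty}\frac{(\chi_{\max}+\chi_{k+1})^m}{m!}\{B,A^m\}z(t),\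 t=k\theta\ (k\ge1).\tag{C}$$ Then asymptotic stability of (C) implies asymptotic stability of (S).
   Context: $R_A(\lambda)=(\lambda\,\mathrm{id}-A)^{-1}$; $A$ closed, densely defined, is sectorial if for some $a\in\mathbb R$, $\phi\in(\pi/2,\pi)$, $\Sigma_{a,\phi}:=\{\lambda\in\mathbb C\setminus\{a\}:|\arg(\lambda-a)|<\phi\}\subset\rho(A)$ and $\|R_A(\lambda)\|\le K/|\lambda-a|$ on $\Sigma_{a,\phi}$ for some $K>0$. Generalized nested commutators: $\{B,A^0\}:=B$; given $\{B,A^m\}$ with domain containing $\mathrm D(A)$, on $\widehat{\mathrm D}:=\{x\in \mathrm{D}(A)\cap\mathrm{D}(\{B,A^m\}) : Ax\in\mathrm{D}(\{B,A^m\}),\ \{B,A^m\}x\in\mathrm{D}(A)\}$ (required to contain $\mathrm D(A)$) the operator $x\mapsto \{B,A^m\}Ax-A\{B,A^m\}x$ is required to be closable, and $\{B,A^{m+1}\}$ is its closure. Solutions are understood piecewise via the semigroup: for (S), $x(t)=T_{t-\tau_k}x(\tau_k^+)$ for $t\in(\tau_k,\tau_{k+1}]$ and $x(\tau_{k}^+)=Bx(\tau_{k})$ for $k\ge1$; analogously for (C) with jump times $k\theta$. A system of this kind is asymptotically stable if (stability) for every $\varepsilon>0$ there is $\delta>0$ such that every solution with initial value of norm $<\delta$ satisfies $\|x(t)\|<\varepsilon$ for all $t$, and (attractivity) every solution tends to $0$ as $t\to\infty$. *)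

theory Defs
  imports "HOL-Analysis.Analysis"
begin

text \<open>A complex Banach space is modelled as a real Banach space 'a together with
  a complex scalar multiplication cs extending the real one and compatible with the norm.\<close>
definition complex_scaling :: "(complex \<Rightarrow> 'a::banach \<Rightarrow> 'a) \<Rightarrow> bool" where
  "complex_scaling cs \<longleftrightarrow>
     (\<forall>r x. cs (complex_of_real r) x = r *\<^sub>R x) \<and>
     (\<forall>a b x. cs (a * b) x = cs a (cs b x)) \<and>
     (\<forall>a b x. cs (a + b) x = cs a x + cs b x) \<and>
     (\<forall>a x y. cs a (x + y) = cs a x + cs a y) \<and>
     (\<forall>a x. norm (cs a x) = cmod a * norm x)"

type_synonym 'a opr = "'a set \<times> ('a \<Rightarrow> 'a)"

definition dom :: "'a opr \<Rightarrow> 'a set" where "dom A = fst A"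
definition app :: "'a opr \<Rightarrow> 'a \<Rightarrow> 'a" where "app A = snd A"

definition graph :: "'a opr \<Rightarrow> ('a \<times> 'a) set" where
  "graph A = {(x, app A x) | x. x \<in> dom A}"

definition lin_op :: "(complex \<Rightarrow> 'a::banach \<Rightarrow> 'a) \<Rightarrow> 'a opr \<Rightarrow> bool" where
  "lin_op cs A \<longleftrightarrow>
     0 \<in> dom A \<and>
     (\<forall>x\<in>dom A. \<forall>y\<in>dom A. x + y \<in> dom A \<and> app A (x + y) = app A x + app A y) \<and>
     (\<forall>c. \<forall>x\<in>dom A. cs c x \<in> dom A \<and> app A (cs c x) = cs c (app A x))"

definition closed_op :: "'a::banach opr \<Rightarrow> bool" where
  "closed_op A \<longleftrightarrow> closed (graph A)"

definition densely_defined :: "'a::banach opr \<Rightarrow> bool" where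
  "densely_defined A \<longleftrightarrow> closure (dom A) = UNIV"

definition is_closure_of :: "'a::banach opr \<Rightarrow> 'a opr \<Rightarrow> bool" where
  "is_closure_of G H \<longleftrightarrow> graph G = closure (graph H)"

definition resolvent :: "(complex \<Rightarrow> 'a::banach \<Rightarrow> 'a) \<Rightarrow> 'a opr \<Rightarrow> complex \<Rightarrow> 'a \<Rightarrow> 'a" where
  "resolvent cs A l = inv_into (dom A) (\<lambda>x. cs l x - app A x)"

definition in_resolvent_set :: "(complex \<Rightarrow> 'a::banach \<Rightarrow> 'a) \<Rightarrow> 'a opr \<Rightarrow> complex \<Rightarrow> bool" where
  "in_resolvent_set cs A l \<longleftrightarrow>
     bij_betw (\<lambda>x. cs l x - app A x) (dom A) UNIV \<and> bounded_linear (resolvent cs A l)"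

definition sector :: "real \<Rightarrow> real \<Rightarrow> complex set" where
  "sector a \<phi> = {l. l \<noteq> complex_of_real a \<and> \<bar>Arg (l - complex_of_real a)\<bar> < \<phi>}"

definition sectorial_with ::
  "(complex \<Rightarrow> 'a::banach \<Rightarrow> 'a) \<Rightarrow> 'a opr \<Rightarrow> real \<Rightarrow> real \<Rightarrow> real \<Rightarrow> bool" where
  "sectorial_with cs A a \<phi> K \<longleftrightarrow>
     lin_op cs A \<and> closed_op A \<and> densely_defined A \<and>
     pi / 2 < \<phi> \<and> \<phi> < pi \<and> K > 0 \<and>
     (\<forall>l\<in>sector a \<phi>. in_resolvent_set cs A l \<and>
        onorm (resolvent cs A l) \<le> K / cmod (l - complex_of_real a))"

definition generates_semigroup :: "'a::banach opr \<Rightarrow> (real \<Rightarrow> 'a \<Rightarrow> 'a) \<Rightarrow> bool" where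
  "generates_semigroup A T \<longleftrightarrow>
     (\<forall>t\<ge>0. bounded_linear (T t)) \<and>
     T 0 = id \<and>
     (\<forall>s\<ge>0. \<forall>t\<ge>0. T (s + t) = T s \<circ> T t) \<and>
     (\<forall>x. ((\<lambda>t. T t x) \<longlongrightarrow> x) (at_right 0)) \<and>
     dom A = {x. \<exists>y. ((\<lambda>h. (1 / h) *\<^sub>R (T h x - x)) \<longlongrightarrow> y) (at_right 0)} \<and>
     (\<forall>x\<in>dom A. ((\<lambda>h. (1 / h) *\<^sub>R (T h x - x)) \<longlongrightarrow> app A x) (at_right 0))"

text \<open>Generalized nested commutators: C m = {B, A^m}.\<close>
definition hatD :: "'a opr \<Rightarrow> 'a opr \<Rightarrow> 'a set" where
  "hatD A Cm = {x. x \<in> dom A \<and> x \<in> dom Cm \<and> app A x \<in> dom Cm \<and> app Cm x \<in> dom A}"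

definition nested_commutators :: "'a::banach opr \<Rightarrow> 'a opr \<Rightarrow> (nat \<Rightarrow> 'a opr) \<Rightarrow> bool" where
  "nested_commutators A B C \<longleftrightarrow>
     C 0 = B \<and>
     (\<forall>m. dom A \<subseteq> dom (C m) \<and> dom A \<subseteq> hatD A (C m) \<and>
          is_closure_of (C (Suc m))
            (hatD A (C m), \<lambda>x. app (C m) (app A x) - app A (app (C m) x)))"

text \<open>Piecewise solutions of an impulsive system with jump times tau k, jump maps J k
  (applied at tau k, k >= 1), and semigroup T. post k is the state x(tau_k^+).\<close>
primrec post :: "(real \<Rightarrow> 'a \<Rightarrow> 'a) \<Rightarrow> (nat \<Rightarrow> real) \<Rightarrow> (nat \<Rightarrow> 'a \<Rightarrow> 'a) \<Rightarrow> 'a \<Rightarrow> nat \<Rightarrow> 'a" where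
  "post T tau J x0 0 = x0"
| "post T tau J x0 (Suc k) = J (Suc k) (T (tau (Suc k) - tau k) (post T tau J x0 k))"

definition imp_sol :: "(real \<Rightarrow> 'a \<Rightarrow> 'a) \<Rightarrow> (nat \<Rightarrow> real) \<Rightarrow> (nat \<Rightarrow> 'a \<Rightarrow> 'a) \<Rightarrow> 'a \<Rightarrow> real \<Rightarrow> 'a" where
  "imp_sol T tau J x0 t =
     (if t \<le> tau 0 then x0
      else (let k = (LEAST k. t \<le> tau (Suc k)) in T (t - tau k) (post T tau J x0 k)))"

definition asym_stable ::
  "(real \<Rightarrow> 'a::real_normed_vector \<Rightarrow> 'a) \<Rightarrow> (nat \<Rightarrow> real) \<Rightarrow> (nat \<Rightarrow> 'a \<Rightarrow> 'a) \<Rightarrow> 'a set \<Rightarrow> bool" where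
  "asym_stable T tau J D \<longleftrightarrow>
     (\<forall>\<epsilon>>0. \<exists>\<delta>>0. \<forall>x0\<in>D. norm x0 < \<delta> \<longrightarrow>
        (\<forall>t\<ge>tau 0. norm (imp_sol T tau J x0 t) < \<epsilon>)) \<and>
     (\<forall>x0\<in>D. ((\<lambda>t. imp_sol T tau J x0 t) \<longlongrightarrow> 0) at_top)"

end

theory Submission
  imports Defs
begin



lemma ubp:
  fixes f :: "nat \<Rightarrow> 'a::banach \<Rightarrow> 'b::real_normed_vector"
  assumes bl: "\<And>n. bounded_linear (f n)" and pb: "\<And>x. \<exists>c. \<forall>n. norm (f n x) \<le> c"
  shows "\<exists>M. \<forall>n. onorm (f n) \<le> M"
proof -
  define F where "F k = {x. \<forall>n. norm (f n x) \<le> real k}" for k :: nat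
  have clF: "closed (F k)" for k
  proof -
    have "F k = (\<Inter>n. {x. norm (f n x) \<le> real k})" by (auto simp: F_def)
    moreover have "closed {x. norm (f n x) \<le> real k}" for n
      by (intro closed_Collect_le continuous_intros linear_continuous_on[OF bl])
    ultimately show ?thesis by auto
  qed
  have U: "(\<Union>k. F k) = UNIV"
  proof safe
    fix x
    obtain c where c: "\<forall>n. norm (f n x) \<le> c" using pb by blast
    obtain k::nat where "c \<le> real k" using real_arch_simple by blast
    then have "x \<in> F k" using c by (auto simp: F_def intro: order_trans)
    then show "x \<in> (\<Union>k. F k)" by blast
  qed simp
  have "\<exists>k. interior (F k) \<noteq> {}"
  proof (rule ccontr)
    assume "\<not> ?thesis"
    then have "Met_TC.mtopology interior_of \<Union>(range F) = {}"
    proof (intro Met_TC.metric_Baire_category_alt)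
      show "Met_TC.mcomplete TYPE('a)" using complete_UNIV mcomplete_iff_complete by blast
    qed (use clF \<open>\<not> (\<exists>k. interior (F k) \<noteq> {})\<close> in auto)
    then show False using U by simp
  qed
  then obtain k x0 where "x0 \<in> interior (F k)" by blast
  then obtain r where r: "r > 0" "ball x0 r \<subseteq> F k" using mem_interior by blast
  have "onorm (f n) \<le> 4 * real k / r" for n
  proof (rule onorm_bound)
    show "0 \<le> 4 * real k / r" using r by simp
    fix x
    show "norm (f n x) \<le> 4 * real k / r * norm x"
    proof (cases "x = 0")
      case True then show ?thesis using bl[of n] by (simp add: linear_simps)
    next
      case False
      define y where "y = (r / 2 / norm x) *\<^sub>R x"
      have ny: "norm y = r/2" using False r by (simp add: y_def)
      have "x0 + y \<in> ball x0 r" "x0 \<in> ball x0 r" using r ny by (simp_all add: dist_norm)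
      then have "x0 + y \<in> F k" "x0 \<in> F k" using r(2) by blast+
      then have "norm (f n (x0 + y)) \<le> k" "norm (f n x0) \<le> k" by (auto simp: F_def)
      moreover have "f n y = f n (x0 + y) - f n x0" using bl[of n] by (simp add: linear_simps)
      ultimately have "norm (f n y) \<le> 2 * k"
        using norm_triangle_ineq4[of "f n (x0 + y)" "f n x0"] by simp
      moreover have "f n y = (r / 2 / norm x) *\<^sub>R f n x" using bl[of n] by (simp add: y_def linear_simps)
      ultimately have "(r / 2 / norm x) * norm (f n x) \<le> 2 * k" using r by simp
      then show ?thesis using r False by (simp add: field_simps)
    qed
  qed
  then show ?thesis by blast
qed




locale csg =
  fixes T :: "real \<Rightarrow> 'a::banach \<Rightarrow> 'a"
  assumes bl: "\<And>t. t \<ge> 0 \<Longrightarrow> bounded_linear (T t)"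
    and T0: "T 0 = id"
    and semi: "\<And>s t. s \<ge> 0 \<Longrightarrow> t \<ge> 0 \<Longrightarrow> T (s + t) = T s \<circ> T t"
    and c0: "\<And>x. ((\<lambda>t. T t x) \<longlongrightarrow> x) (at_right 0)"
begin

lemma Tapp: "s \<ge> 0 \<Longrightarrow> t \<ge> 0 \<Longrightarrow> T (s + t) x = T s (T t x)"
  using semi by simp

lemma Tcomm: "s \<ge> 0 \<Longrightarrow> t \<ge> 0 \<Longrightarrow> T s (T t x) = T t (T s x)"
  by (metis Tapp add.commute)

lemma Tadd: "t \<ge> 0 \<Longrightarrow> T t (x + y) = T t x + T t y"
  using bl bounded_linear.linear linear_add by blast
lemma Tdiff: "t \<ge> 0 \<Longrightarrow> T t (x - y) = T t x - T t y"
  using bl bounded_linear.linear linear_diff by blast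
lemma Tscale: "t \<ge> 0 \<Longrightarrow> T t (c *\<^sub>R x) = c *\<^sub>R T t x"
  using bl bounded_linear.linear linear_scale by blast
lemma Tminus: "t \<ge> 0 \<Longrightarrow> T t (- x) = - T t x"
  using bl bounded_linear.linear linear_neg by blast
lemma Tzero: "t \<ge> 0 \<Longrightarrow> T t 0 = 0"
  using bl bounded_linear.linear linear_0 by blast
lemma Tnorm: "t \<ge> 0 \<Longrightarrow> norm (T t x) \<le> onorm (T t) * norm x"
  using bl onorm by blast
lemma Tonorm_nn: "t \<ge> 0 \<Longrightarrow> 0 \<le> onorm (T t)"
  using bl onorm_pos_le by blast

lemma c0': 
  assumes "e > 0" shows "\<exists>d>0. \<forall>t. 0 \<le> t \<and> t < d \<longrightarrow> norm (T t x - x) < e"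
proof -
  have "eventually (\<lambda>t. dist (T t x) x < e) (at_right 0)"
    using c0[of x] assms by (simp add: tendsto_iff)
  then obtain b where b: "b > 0" "\<And>y. y > 0 \<Longrightarrow> y < b \<Longrightarrow> dist (T y x) x < e"
    unfolding eventually_at_right_field by auto
  have "\<forall>t. 0 \<le> t \<and> t < b \<longrightarrow> norm (T t x - x) < e"
  proof safe
    fix t :: real assume "0 \<le> t" "t < b"
    then show "norm (T t x - x) < e"
      using b assms by (cases "t = 0") (auto simp: T0 dist_norm)
  qed
  then show ?thesis using b by blast
qed

lemma local_bound: "\<exists>d>0. \<exists>M. \<forall>t. 0 \<le> t \<and> t \<le> d \<longrightarrow> onorm (T t) \<le> M"
proof (rule ccontr)
  assume not: "\<not> ?thesis"
  have "\<forall>n::nat. \<exists>t. 0 \<le> t \<and> t \<le> 1 / real (Suc n) \<and> onorm (T t) > real n"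
  proof
    fix n :: nat
    have "\<not> (\<forall>t. 0 \<le> t \<and> t \<le> 1 / real (Suc n) \<longrightarrow> onorm (T t) \<le> real n)"
      using not by (metis of_nat_0_less_iff zero_less_Suc zero_less_divide_1_iff)
    then show "\<exists>t. 0 \<le> t \<and> t \<le> 1 / real (Suc n) \<and> onorm (T t) > real n" by force
  qed
  then obtain tn where tn: "\<And>n. 0 \<le> tn n" "\<And>n. tn n \<le> 1 / real (Suc n)" "\<And>n. onorm (T (tn n)) > real n"
    by metis
  have "\<exists>c. \<forall>n. norm (T (tn n) x) \<le> c" for x
  proof -
    have "(\<lambda>n. T (tn n) x) \<longlonglongrightarrow> x"
    proof (rule LIMSEQ_I)
      fix r :: real assume "r > 0"
      then obtain d where d: "d > 0" "\<And>t. 0 \<le> t \<and> t < d \<Longrightarrow> norm (T t x - x) < r"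
        using c0' by blast
      obtain no :: nat where no: "1 / d < real no" using reals_Archimedean2 by blast
      have "norm (T (tn n) x - x) < r" if "n \<ge> no" for n
      proof -
        have "1 / d < real (Suc n)" using no that of_nat_mono[OF that] by linarith
        then have "1 / real (Suc n) < d"
          using d(1) by (simp add: field_simps)
        then show ?thesis using tn(1,2)[of n] d(2) by force
      qed
      then show "\<exists>no. \<forall>n\<ge>no. norm (T (tn n) x - x) < r" by blast
    qed
    then have "Bseq (\<lambda>n. T (tn n) x)" using convergent_imp_Bseq convergentI by blast
    then show ?thesis unfolding Bseq_def by blast
  qed
  then obtain M where M: "\<And>n. onorm (T (tn n)) \<le> M"
    using ubp[of "\<lambda>n. T (tn n)"] bl tn(1) by blast
  obtain n :: nat where "M < real n" using reals_Archimedean2 by blast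
  then show False using M[of n] tn(3)[of n] by simp
qed

lemma bound: "\<exists>M>0. \<forall>t. 0 \<le> t \<and> t \<le> R \<longrightarrow> onorm (T t) \<le> M"
proof -
  obtain d M0 where d: "d > 0" "\<And>t. 0 \<le> t \<and> t \<le> d \<Longrightarrow> onorm (T t) \<le> M0"
    using local_bound by blast
  have M0: "M0 \<ge> 0" using d(2)[of 0] Tonorm_nn[of 0] d(1) by linarith
  have "\<exists>M\<ge>0. \<forall>t. 0 \<le> t \<and> t \<le> real n * d \<longrightarrow> onorm (T t) \<le> M" for n
  proof (induction n)
    case 0
    then show ?case using d M0 by force
  next
    case (Suc n)
    then obtain M where M: "M \<ge> 0" "\<And>t. 0 \<le> t \<and> t \<le> real n * d \<Longrightarrow> onorm (T t) \<le> M" by blast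
    have "onorm (T t) \<le> max M (max M0 (M * M0))" if t: "0 \<le> t" "t \<le> real (Suc n) * d" for t
    proof (cases "t \<le> real n * d")
      case True 
      then have "onorm (T t) \<le> M" using M(2) t by blast
      then show ?thesis by simp
    next
      case False
      show ?thesis
      proof (cases "t \<le> d")
        case True
        then have "onorm (T t) \<le> M0" using d(2) t by blast
        then show ?thesis by simp
      next
        case False2: False
        then have t1: "t - d \<ge> 0" "t - d \<le> real n * d" using t d(1)
          by (auto simp: algebra_simps)
        have "T t = T (t - d) \<circ> T d" using semi[of "t - d" d] t1 d(1) by simp
        then have "onorm (T t) \<le> onorm (T (t - d)) * onorm (T d)"
          using onorm_compose bl t1 d(1) by (metis less_eq_real_def)
        also have "\<dots> \<le> M * M0"
          using M(2)[OF conjI[OF t1]] d(2)[of d] d(1) Tonorm_nn[of d] Tonorm_nn[OF t1(1)]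
          by (intro mult_mono) auto
        finally show ?thesis by simp
      qed
    qed
    then show ?case using M by (intro exI[of _ "max M (max M0 (M * M0))"]) auto
  qed
  moreover obtain n :: nat where "R / d < real n" using reals_Archimedean2 by blast
  then have "R \<le> real n * d" using d(1) by (simp add: field_simps)
  ultimately obtain M where "M \<ge> 0" "\<And>t. 0 \<le> t \<and> t \<le> R \<Longrightarrow> onorm (T t) \<le> M"
    by (meson order_trans)
  then show ?thesis by (intro exI[of _ "M + 1"]) force
qed

lemma cont:
  assumes t: "t \<ge> 0" and e: "e > 0"
  shows "\<exists>d>0. \<forall>s\<ge>0. \<bar>s - t\<bar> < d \<longrightarrow> norm (T s x - T t x) < e"
proof -
  obtain M where M: "M > 0" "\<And>s. 0 \<le> s \<and> s \<le> t + 1 \<Longrightarrow> onorm (T s) \<le> M"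
    using bound by blast
  obtain d0 where d0: "d0 > 0" "\<And>h. 0 \<le> h \<and> h < d0 \<Longrightarrow> norm (T h x - x) < e / M"
    using c0'[where e="e / M" and x=x] e M by auto
  have "norm (T s x - T t x) < e" if s: "s \<ge> 0" "\<bar>s - t\<bar> < min d0 1" for s
  proof (cases "s \<ge> t")
    case True
    have "T s x = T t (T (s - t) x)" using Tapp[of t "s - t"] t True by simp
    then have "T s x - T t x = T t (T (s - t) x - x)" using Tdiff t by simp
    then have "norm (T s x - T t x) \<le> onorm (T t) * norm (T (s - t) x - x)" using Tnorm t by simp
    also have "\<dots> \<le> M * norm (T (s - t) x - x)" using M(2)[of t] t by (intro mult_right_mono) auto
    also have "\<dots> < M * (e / M)" using d0(2)[of "s - t"] True s M by (intro mult_strict_left_mono) auto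
    finally show ?thesis using M by simp
  next
    case False
    have "T t x = T s (T (t - s) x)" using Tapp[of s "t - s"] s False by simp
    then have "T s x - T t x = T s (x - T (t - s) x)" using Tdiff s by simp
    then have "norm (T s x - T t x) \<le> onorm (T s) * norm (T (t - s) x - x)"
      using Tnorm s by (simp add: norm_minus_commute)
    also have "\<dots> \<le> M * norm (T (t - s) x - x)" using M(2)[of s] s False by (intro mult_right_mono) auto
    also have "\<dots> < M * (e / M)" using d0(2)[of "t - s"] False s M by (intro mult_strict_left_mono) auto
    finally show ?thesis using M by simp
  qed
  then show ?thesis using d0(1) by (intro exI[of _ "min d0 1"]) auto
qed

definition gen_at :: "'a \<Rightarrow> 'a \<Rightarrow> bool" where
  "gen_at y v \<longleftrightarrow> ((\<lambda>h. (1 / h) *\<^sub>R (T h y - y)) \<longlongrightarrow> v) (at_right 0)"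

lemma gen_at_eps:
  assumes "gen_at y v" "e > 0"
  shows "\<exists>d>0. \<forall>h. 0 \<le> h \<and> h < d \<longrightarrow> norm (T h y - y - h *\<^sub>R v) \<le> e * h"
proof -
  have "eventually (\<lambda>h. dist ((1 / h) *\<^sub>R (T h y - y)) v < e) (at_right 0)"
    using assms by (simp add: gen_at_def tendsto_iff)
  then obtain b where b: "b > 0" "\<And>h. h > 0 \<Longrightarrow> h < b \<Longrightarrow> dist ((1 / h) *\<^sub>R (T h y - y)) v < e"
    unfolding eventually_at_right_field by auto
  have "norm (T h y - y - h *\<^sub>R v) \<le> e * h" if h: "0 \<le> h" "h < b" for h
  proof (cases "h = 0")
    case True then show ?thesis by (simp add: T0)
  next
    case False
    then have hp: "h > 0" using h by simp
    have "T h y - y - h *\<^sub>R v = h *\<^sub>R ((1 / h) *\<^sub>R (T h y - y) - v)"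
      using hp by (simp add: algebra_simps)
    then have "norm (T h y - y - h *\<^sub>R v) = h * dist ((1 / h) *\<^sub>R (T h y - y)) v"
      using hp by (simp add: dist_norm)
    also have "\<dots> \<le> h * e" using b(2)[OF hp h(2)] hp by simp
    finally show ?thesis by (simp add: mult.commute)
  qed
  then show ?thesis using b(1) by blast
qed

lemma gen_at_T:
  assumes "gen_at y v" "t \<ge> 0"
  shows "gen_at (T t y) (T t v)"
proof -
  have "((\<lambda>h. T t ((1 / h) *\<^sub>R (T h y - y))) \<longlongrightarrow> T t v) (at_right 0)"
    using assms bounded_linear.tendsto[OF bl[OF assms(2)]] unfolding gen_at_def by blast
  moreover have "eventually (\<lambda>h. T t ((1 / h) *\<^sub>R (T h y - y)) = (1 / h) *\<^sub>R (T h (T t y) - T t y)) (at_right 0)"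
    unfolding eventually_at_right_field
  proof (intro exI[of _ 1] conjI allI impI)
    fix h :: real assume "h > 0"
    then show "T t ((1 / h) *\<^sub>R (T h y - y)) = (1 / h) *\<^sub>R (T h (T t y) - T t y)"
      using assms(2) by (simp add: Tscale Tdiff Tcomm)
  qed simp
  ultimately show ?thesis unfolding gen_at_def using tendsto_cong by fastforce
qed

lemma deriv:
  assumes g: "gen_at y v" and t: "t \<ge> 0"
  shows "((\<lambda>s. T s y) has_derivative (\<lambda>h. h *\<^sub>R T t v)) (at t within {0..})"
  unfolding has_derivative_within_alt
proof (intro conjI allI impI)
  show "bounded_linear (\<lambda>h. h *\<^sub>R T t v)" by (rule bounded_linear_scaleR_left)
  fix e :: real assume e: "e > 0"
  obtain M where M: "M > 0" "\<And>s. 0 \<le> s \<and> s \<le> t + 1 \<Longrightarrow> onorm (T s) \<le> M"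
    using bound by blast
  define e' where "e' = e / (M + 1)"
  have e': "e' > 0" using e M by (simp add: e'_def)
  obtain d1 where d1: "d1 > 0" "\<And>h. 0 \<le> h \<and> h < d1 \<Longrightarrow> norm (T h y - y - h *\<^sub>R v) \<le> e' * h"
    using gen_at_eps[OF g e'] by blast
  obtain d2 where d2: "d2 > 0" "\<And>s. s \<ge> 0 \<Longrightarrow> \<bar>s - t\<bar> < d2 \<Longrightarrow> norm (T s v - T t v) < e'"
    using cont[OF t e'] by blast
  have "norm (T s y - T t y - (s - t) *\<^sub>R T t v) \<le> e * norm (s - t)"
    if s: "s \<in> {0..}" "norm (s - t) < min 1 (min d1 d2)" for s
  proof (cases "s \<ge> t")
    case True
    have "T s y = T t (T (s - t) y)" using Tapp[of t "s - t"] t True by simp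
    then have "T s y - T t y - (s - t) *\<^sub>R T t v = T t (T (s - t) y - y - (s - t) *\<^sub>R v)"
      using t by (simp add: Tdiff Tscale)
    then have "norm (T s y - T t y - (s - t) *\<^sub>R T t v) \<le> onorm (T t) * norm (T (s - t) y - y - (s - t) *\<^sub>R v)"
      using Tnorm t by simp
    also have "\<dots> \<le> M * (e' * (s - t))"
      using M(2)[of t] t d1(2)[of "s - t"] True s M(1) by (intro mult_mono) auto
    also have "\<dots> \<le> e * norm (s - t)"
      using True M e by (simp add: e'_def field_simps)
    finally show ?thesis .
  next
    case False
    define h where "h = t - s"
    have h: "h > 0" "h < d1" using False s by (auto simp: h_def)
    have sh: "s \<ge> 0" using s by simp
    have "T t y = T s (T h y)" using Tapp[of s h] sh h by (simp add: h_def)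
    have e1: "T s (T h y - y - h *\<^sub>R v) = T t y - T s y - h *\<^sub>R T s v"
      using sh \<open>T t y = T s (T h y)\<close> by (simp add: Tdiff Tscale)
    have st: "s - t = - h" by (simp add: h_def)
    have "T s y - T t y - (s - t) *\<^sub>R T t v = - T s (T h y - y - h *\<^sub>R v) + h *\<^sub>R (T t v - T s v)"
      unfolding e1 st by (simp add: algebra_simps)
    then have "norm (T s y - T t y - (s - t) *\<^sub>R T t v) \<le> norm (T s (T h y - y - h *\<^sub>R v)) + h * norm (T t v - T s v)"
      using h by (metis abs_of_pos norm_minus_cancel norm_scaleR norm_triangle_ineq)
    also have "\<dots> \<le> M * (e' * h) + h * e'"
    proof (intro add_mono)
      show "norm (T s (T h y - y - h *\<^sub>R v)) \<le> M * (e' * h)"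
      proof -
        have a: "onorm (T s) \<le> M" using M(2)[of s] sh False by simp
        have b: "norm (T h y - y - h *\<^sub>R v) \<le> e' * h" using d1(2)[of h] h by simp
        have "norm (T s (T h y - y - h *\<^sub>R v)) \<le> onorm (T s) * norm (T h y - y - h *\<^sub>R v)"
          using Tnorm[OF sh] by blast
        also have "\<dots> \<le> M * (e' * h)" using a b M(1) by (intro mult_mono) auto
        finally show ?thesis .
      qed
      show "h * norm (T t v - T s v) \<le> h * e'"
        using d2(2)[OF sh] s h by (simp add: norm_minus_commute abs_minus_commute)
    qed
    also have "\<dots> = (M + 1) * e' * h" by (simp add: algebra_simps)
    also have "\<dots> = e * h" using M by (simp add: e'_def)
    also have "\<dots> = e * norm (s - t)" using h by (simp add: h_def)
    finally show ?thesis .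
  qed
  then show "\<exists>d>0. \<forall>s\<in>{0..}. norm (s - t) < d \<longrightarrow> norm (T s y - T t y - (s - t) *\<^sub>R T t v) \<le> e * norm (s - t)"
    using d1(1) d2(1) by (intro exI[of _ "min 1 (min d1 d2)"]) auto
qed

end



context csg begin

lemma prod_deriv:
  assumes g: "(g has_vector_derivative g') (at r within S)" and S: "S \<subseteq> {0..R}" and r: "r \<in> S"
    and ga: "gen_at (g r) u"
  shows "((\<lambda>s. T s (g s)) has_vector_derivative (T r u + T r g')) (at r within S)"
  unfolding has_vector_derivative_def has_derivative_within_alt
proof (intro conjI allI impI)
  show "bounded_linear (\<lambda>h. h *\<^sub>R (T r u + T r g'))" by (rule bounded_linear_scaleR_left)
  fix e :: real assume e: "e > 0"
  obtain M where M: "M > 0" "\<And>s. 0 \<le> s \<and> s \<le> R \<Longrightarrow> onorm (T s) \<le> M" using bound by blast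
  define e' where "e' = e / (M + 2)"
  have e': "e' > 0" using e M by (simp add: e'_def)
  have r0: "r \<ge> 0" using S r by auto
  obtain d1 where d1: "d1 > 0" "\<And>s. s \<in> S \<Longrightarrow> norm (s - r) < d1 \<Longrightarrow> norm (g s - g r - (s - r) *\<^sub>R g') \<le> e' * norm (s - r)"
    using g e' unfolding has_vector_derivative_def has_derivative_within_alt by blast
  obtain d2 where d2: "d2 > 0" "\<And>s. s \<in> {0..} \<Longrightarrow> norm (s - r) < d2 \<Longrightarrow>
      norm (T s (g r) - T r (g r) - (s - r) *\<^sub>R T r u) \<le> e' * norm (s - r)"
    using deriv[OF ga r0] e' unfolding has_derivative_within_alt by blast
  obtain d3 where d3: "d3 > 0" "\<And>s. s \<ge> 0 \<Longrightarrow> \<bar>s - r\<bar> < d3 \<Longrightarrow> norm (T s g' - T r g') < e'"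
    using cont[OF r0 e'] by blast
  have "norm (T s (g s) - T r (g r) - (s - r) *\<^sub>R (T r u + T r g')) \<le> e * norm (s - r)"
    if s: "s \<in> S" "norm (s - r) < min d1 (min d2 d3)" for s
  proof -
    have s0: "s \<ge> 0" "s \<le> R" using s S by auto
    have ex: "T s (g s - g r - (s - r) *\<^sub>R g') = T s (g s) - T s (g r) - (s - r) *\<^sub>R T s g'"
      using s0 by (simp add: Tdiff Tscale)
    have eq: "T s (g s) - T r (g r) - (s - r) *\<^sub>R (T r u + T r g') =
      T s (g s - g r - (s - r) *\<^sub>R g') + (s - r) *\<^sub>R (T s g' - T r g') +
      (T s (g r) - T r (g r) - (s - r) *\<^sub>R T r u)"
      unfolding ex by (simp add: algebra_simps)
    have "norm (T s (g s) - T r (g r) - (s - r) *\<^sub>R (T r u + T r g')) \<le>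
      norm (T s (g s - g r - (s - r) *\<^sub>R g')) + norm ((s - r) *\<^sub>R (T s g' - T r g')) +
      norm (T s (g r) - T r (g r) - (s - r) *\<^sub>R T r u)"
      unfolding eq by (meson norm_triangle_le norm_triangle_ineq add_mono order_refl order_trans)
    also have "\<dots> \<le> M * (e' * norm (s - r)) + norm (s - r) * e' + e' * norm (s - r)"
    proof (intro add_mono)
      have "norm (T s (g s - g r - (s - r) *\<^sub>R g')) \<le> onorm (T s) * norm (g s - g r - (s - r) *\<^sub>R g')"
        using Tnorm[OF s0(1)] by blast
      also have "\<dots> \<le> M * (e' * norm (s - r))"
        using M(2)[of s] s0 d1(2)[OF s(1)] s(2) M(1) by (intro mult_mono) auto
      finally show "norm (T s (g s - g r - (s - r) *\<^sub>R g')) \<le> M * (e' * norm (s - r))" .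
      show "norm ((s - r) *\<^sub>R (T s g' - T r g')) \<le> norm (s - r) * e'"
        using d3(2)[OF s0(1)] s(2) by (simp add: mult_left_mono)
      show "norm (T s (g r) - T r (g r) - (s - r) *\<^sub>R T r u) \<le> e' * norm (s - r)"
        using d2(2)[of s] s0 s(2) by simp
    qed
    also have "\<dots> = (M + 2) * e' * norm (s - r)" by (simp add: algebra_simps)
    also have "\<dots> = e * norm (s - r)" using M by (simp add: e'_def)
    finally show ?thesis .
  qed
  then show "\<exists>d>0. \<forall>s\<in>S. norm (s - r) < d \<longrightarrow>
      norm (T s (g s) - T r (g r) - (s - r) *\<^sub>R (T r u + T r g')) \<le> e * norm (s - r)"
    using d1(1) d2(1) d3(1) by (intro exI[of _ "min d1 (min d2 d3)"]) auto
qed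

end

lemma tele:
  fixes F :: "nat \<Rightarrow> 'a::real_vector" and r :: real
  shows "(\<Sum>m<Suc n. (real m * r ^ (m - 1) / fact m) *\<^sub>R F m - (r ^ m / fact m) *\<^sub>R F (Suc m))
        = - ((r ^ n / fact n) *\<^sub>R F (Suc n))"
proof (induction n)
  case 0 then show ?case by simp
next
  case (Suc n)
  have "real (Suc n) * r ^ n / fact (Suc n) = r ^ n / fact n"
    by (simp add: fact_Suc field_simps del: of_nat_Suc)
  then show ?case using Suc by (simp add: algebra_simps del: of_nat_Suc)
qed




locale ident = csg T for T :: "real \<Rightarrow> 'a::banach \<Rightarrow> 'a" +
  fixes Ad :: "'a set" and Aop :: "'a \<Rightarrow> 'a" and Cm :: "nat \<Rightarrow> 'a \<Rightarrow> 'a" and t0 :: real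
  assumes gen: "\<And>x. x \<in> Ad \<Longrightarrow> gen_at x (Aop x)"
    and Ad_T: "\<And>x t. x \<in> Ad \<Longrightarrow> t \<ge> 0 \<Longrightarrow> T t x \<in> Ad"
    and A_T: "\<And>x t. x \<in> Ad \<Longrightarrow> t \<ge> 0 \<Longrightarrow> Aop (T t x) = T t (Aop x)"
    and Ad_C: "\<And>x m. x \<in> Ad \<Longrightarrow> Cm m x \<in> Ad"
    and comm_eq: "\<And>x m. x \<in> Ad \<Longrightarrow> Cm (Suc m) x = Cm m (Aop x) - Aop (Cm m x)"
    and Ad_add: "\<And>x y. x \<in> Ad \<Longrightarrow> y \<in> Ad \<Longrightarrow> x + y \<in> Ad \<and> Aop (x + y) = Aop x + Aop y"
    and Ad_scale: "\<And>x c. x \<in> Ad \<Longrightarrow> c *\<^sub>R x \<in> Ad \<and> Aop (c *\<^sub>R x) = c *\<^sub>R Aop x"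
    and Ad_zero: "0 \<in> Ad"
    and t0: "t0 \<ge> 0"
    and kbl: "\<And>m. bounded_linear (\<lambda>x. Cm m (T t0 x))"
begin

lemma A_zero: "Aop 0 = 0"
  using Ad_scale[OF Ad_zero, of 0] by simp

lemma Ad_sum: "finite I \<Longrightarrow> (\<And>i. i \<in> I \<Longrightarrow> f i \<in> Ad) \<Longrightarrow> sum f I \<in> Ad \<and> Aop (sum f I) = (\<Sum>i\<in>I. Aop (f i))"
proof (induction I rule: finite_induct)
  case empty then show ?case by (simp add: Ad_zero A_zero)
next
  case (insert x F)
  then show ?case using Ad_add by simp
qed

lemma kneg: "Cm m (T t0 (- x)) = - Cm m (T t0 x)"
  using kbl[of m] bounded_linear.linear linear_neg by blast

lemma ident_fin:
  assumes w: "w \<in> Ad" and \<sigma>: "\<sigma> \<ge> 0" and M: "\<And>s. 0 \<le> s \<and> s \<le> \<sigma> \<Longrightarrow> onorm (T s) \<le> M"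
  shows "norm (T \<sigma> (\<Sum>m<Suc n. (\<sigma> ^ m / fact m) *\<^sub>R Cm m (T t0 w)) - Cm 0 (T t0 (T \<sigma> w)))
          \<le> M * M * (\<sigma> ^ n / fact n * onorm (\<lambda>x. Cm (Suc n) (T t0 x))) * norm w * \<sigma>"
proof -
  define k where "k m x = Cm m (T t0 x)" for m x
  define v where "v r = T (\<sigma> - r) w" for r
  define c where "c m r = r ^ m / fact m" for m :: nat and r :: real
  define c' where "c' m r = real m * r ^ (m - 1) / fact m" for m :: nat and r :: real
  define g where "g r = (\<Sum>m<Suc n. c m r *\<^sub>R k m (v r))" for r
  define g' where "g' r = (\<Sum>m<Suc n. c m r *\<^sub>R k m (- T (\<sigma> - r) (Aop w)) + c' m r *\<^sub>R k m (v r))" for r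
  have keq: "k m = (\<lambda>x. Cm m (T t0 x))" for m by (simp add: fun_eq_iff k_def)
  have kblk: "bounded_linear (k m)" for m
    using kbl keq by simp
  have M0: "M \<ge> 0" using M[of 0] Tonorm_nn[of 0] \<sigma> by linarith
  have dv: "(v has_vector_derivative (- T (\<sigma> - r) (Aop w))) (at r within {0..\<sigma>})" if r: "r \<in> {0..\<sigma>}" for r
  proof -
    have d1: "((\<lambda>r. \<sigma> - r) has_vector_derivative (-1)) (at r within {0..\<sigma>})"
      by (auto intro!: derivative_eq_intros)
    have "((\<lambda>s. T s w) has_vector_derivative T (\<sigma> - r) (Aop w)) (at (\<sigma> - r) within {0..})"
      using deriv[OF gen[OF w], of "\<sigma> - r"] r unfolding has_vector_derivative_def by simp
    then have d2: "((\<lambda>s. T s w) has_vector_derivative T (\<sigma> - r) (Aop w)) (at (\<sigma> - r) within (\<lambda>r. \<sigma> - r) ` {0..\<sigma>})"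
      by (rule has_vector_derivative_within_subset) auto
    have "v = (\<lambda>x. T (\<sigma> - x) w)" by (simp add: fun_eq_iff v_def)
    then show ?thesis using vector_diff_chain_within[OF d1 d2] by (simp add: o_def)
  qed
  have dc: "((c m) has_field_derivative c' m r) (at r within S)" for m r S
    unfolding c_def c'_def using DERIV_cdivide[OF DERIV_pow[of m r S], of "fact m"] by simp
  have dg: "(g has_vector_derivative g' r) (at r within {0..\<sigma>})" if r: "r \<in> {0..\<sigma>}" for r
    unfolding g_def g'_def
  proof (intro has_vector_derivative_sum has_vector_derivative_scaleR[where f="c _", OF dc])
    fix m
    show "((\<lambda>x. k m (v x)) has_vector_derivative k m (- T (\<sigma> - r) (Aop w))) (at r within {0..\<sigma>})"
      using bounded_linear.has_vector_derivative[OF kbl[of m] dv[OF r]] by (simp add: k_def)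
  qed
  have vAd: "T t0 (v r) \<in> Ad" if "r \<le> \<sigma>" for r
    using Ad_T[OF Ad_T[OF w, of "\<sigma> - r"] t0] that by (simp add: v_def)
  have gAd: "g r \<in> Ad \<and> Aop (g r) = (\<Sum>m<Suc n. c m r *\<^sub>R Aop (k m (v r)))" if "r \<le> \<sigma>" for r
  proof -
    have "\<And>m. c m r *\<^sub>R k m (v r) \<in> Ad \<and> Aop (c m r *\<^sub>R k m (v r)) = c m r *\<^sub>R Aop (k m (v r))"
      using Ad_scale Ad_C vAd[OF that] by (simp add: k_def)
    then show ?thesis unfolding g_def using Ad_sum[of "{..<Suc n}" "\<lambda>m. c m r *\<^sub>R k m (v r)"] by simp
  qed
  have key: "Aop (g r) + g' r = - ((c n r) *\<^sub>R k (Suc n) (v r))" if r: "r \<in> {0..\<sigma>}" for r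
  proof -
    have yA: "Aop (T t0 (v r)) = T t0 (T (\<sigma> - r) (Aop w))"
      using A_T[OF Ad_T[OF w, of "\<sigma> - r"] t0] A_T[OF w, of "\<sigma> - r"] r by (simp add: v_def)
    have Ak: "Aop (k m (v r)) = k m (T (\<sigma> - r) (Aop w)) - k (Suc m) (v r)" for m
      using comm_eq[OF vAd, of r m] r yA by (simp add: k_def)
    define X where "X = T (\<sigma> - r) (Aop w)"
    have kn: "k m (- X) = - k m X" for m using kneg by (simp add: k_def)
    have "Aop (g r) + g' r = (\<Sum>m<Suc n. c m r *\<^sub>R (k m X - k (Suc m) (v r)) + (c m r *\<^sub>R (- k m X) + c' m r *\<^sub>R k m (v r)))"
      using gAd[of r] r unfolding g'_def Ak X_def[symmetric] kn by (simp add: sum.distrib)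
    also have "\<dots> = (\<Sum>m<Suc n. c' m r *\<^sub>R k m (v r) - c m r *\<^sub>R k (Suc m) (v r))"
      by (rule sum.cong) (simp_all add: algebra_simps)
    finally have "Aop (g r) + g' r = (\<Sum>m<Suc n. c' m r *\<^sub>R k m (v r) - c m r *\<^sub>R k (Suc m) (v r))" .
    also have "\<dots> = - ((c n r) *\<^sub>R k (Suc n) (v r))"
      unfolding c_def c'_def by (rule tele)
    finally show ?thesis .
  qed
  define D where "D r = - T r ((c n r) *\<^sub>R k (Suc n) (v r))" for r
  have dPhi: "((\<lambda>s. T s (g s)) has_vector_derivative D r) (at r within {0..\<sigma>})" if r: "r \<in> {0..\<sigma>}" for r
  proof -
    have "((\<lambda>s. T s (g s)) has_vector_derivative (T r (Aop (g r)) + T r (g' r))) (at r within {0..\<sigma>})"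
      using prod_deriv[OF dg[OF r] _ r gen] gAd r by auto
    moreover have "T r (Aop (g r)) + T r (g' r) = D r"
      using key[OF r] r by (simp add: D_def Tadd[symmetric] Tminus)
    ultimately show ?thesis by simp
  qed
  have Dbound: "norm (D r) \<le> M * M * (\<sigma> ^ n / fact n * onorm (k (Suc n))) * norm w" if r: "r \<in> {0..\<sigma>}" for r
  proof -
    have r0: "0 \<le> r" "r \<le> \<sigma>" using r by auto
    have cn: "0 \<le> c n r" "c n r \<le> \<sigma> ^ n / fact n"
      using r0 by (auto simp: c_def intro!: divide_right_mono power_mono)
    have kn: "0 \<le> onorm (k (Suc n))" using kblk onorm_pos_le by blast
    have vn: "norm (v r) \<le> M * norm w"
    proof -
      have "norm (v r) \<le> onorm (T (\<sigma> - r)) * norm w" unfolding v_def using Tnorm r0 by simp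
      also have "\<dots> \<le> M * norm w" using M[of "\<sigma> - r"] r0 by (intro mult_right_mono) auto
      finally show ?thesis .
    qed
    have "norm (D r) \<le> onorm (T r) * norm ((c n r) *\<^sub>R k (Suc n) (v r))"
      unfolding D_def norm_minus_cancel using Tnorm r0 by blast
    also have "\<dots> \<le> M * (c n r * (onorm (k (Suc n)) * norm (v r)))"
    proof (intro mult_mono)
      show "onorm (T r) \<le> M" using M r0 by blast
      show "norm (c n r *\<^sub>R k (Suc n) (v r)) \<le> c n r * (onorm (k (Suc n)) * norm (v r))"
        using cn onorm[OF kblk[of "Suc n"], of "v r"] by (simp add: mult_left_mono)
    qed (use M0 in auto)
    also have "\<dots> \<le> M * ((\<sigma> ^ n / fact n) * (onorm (k (Suc n)) * (M * norm w)))"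
      using M0 cn kn vn by (intro mult_left_mono mult_mono) auto
    finally show ?thesis by (simp add: algebra_simps)
  qed
  have "norm ((\<lambda>s. T s (g s)) \<sigma> - (\<lambda>s. T s (g s)) 0) \<le> M * M * (\<sigma> ^ n / fact n * onorm (k (Suc n))) * norm w * norm (\<sigma> - 0)"
  proof (rule differentiable_bound[where f' = "\<lambda>r h. h *\<^sub>R D r"])
    show "convex {0..\<sigma>}" by simp
    fix x assume x: "x \<in> {0..\<sigma>}"
    show "((\<lambda>s. T s (g s)) has_derivative (\<lambda>h. h *\<^sub>R D x)) (at x within {0..\<sigma>})"
      using dPhi[OF x] unfolding has_vector_derivative_def .
    show "onorm (\<lambda>h. h *\<^sub>R D x) \<le> M * M * (\<sigma> ^ n / fact n * onorm (k (Suc n))) * norm w"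
    proof (rule onorm_bound)
      show "0 \<le> M * M * (\<sigma> ^ n / fact n * onorm (k (Suc n))) * norm w"
        using Dbound[OF x] norm_ge_zero order_trans by blast
      fix h :: real
      show "norm (h *\<^sub>R D x) \<le> M * M * (\<sigma> ^ n / fact n * onorm (k (Suc n))) * norm w * norm h"
        using mult_left_mono[OF Dbound[OF x] abs_ge_zero[of h]] by (simp add: algebra_simps)
    qed
  qed (use \<sigma> in auto)
  moreover have "(\<lambda>s. T s (g s)) \<sigma> = T \<sigma> (\<Sum>m<Suc n. (\<sigma> ^ m / fact m) *\<^sub>R Cm m (T t0 w))"
    by (simp add: g_def c_def k_def v_def T0)
  moreover have "(\<lambda>s. T s (g s)) 0 = Cm 0 (T t0 (T \<sigma> w))"
    by (simp add: g_def c_def k_def v_def T0 sum.lessThan_Suc_shift del: sum.lessThan_Suc)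
  ultimately show ?thesis using \<sigma> by (simp add: keq)
qed

end



lemma suminf_bl:
  fixes f :: "nat \<Rightarrow> 'a::real_normed_vector \<Rightarrow> 'b::banach"
  assumes bl: "\<And>m. bounded_linear (f m)" and sm: "summable (\<lambda>m. onorm (f m))"
  shows "bounded_linear (\<lambda>x. \<Sum>m. f m x)" "\<And>x. summable (\<lambda>m. f m x)"
proof -
  have nb: "norm (f m x) \<le> onorm (f m) * norm x" for m x using onorm bl by blast
  have smn: "summable (\<lambda>m. norm (f m x))" for x
    by (rule summable_comparison_test[OF _ summable_mult2[OF sm, of "norm x"]]) (use nb in auto)
  show sx: "summable (\<lambda>m. f m x)" for x using summable_norm_cancel[OF smn] .
  show "bounded_linear (\<lambda>x. \<Sum>m. f m x)"
  proof (rule bounded_linear_intro[where K = "\<Sum>m. onorm (f m)"])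
    fix x y
    show "(\<Sum>m. f m (x + y)) = (\<Sum>m. f m x) + (\<Sum>m. f m y)"
      using suminf_add[OF sx sx, of x y] bl by (simp add: linear_simps)
  next
    fix r x
    show "(\<Sum>m. f m (r *\<^sub>R x)) = r *\<^sub>R (\<Sum>m. f m x)"
      using suminf_scaleR_right[OF sx[of x], of r] bl by (simp add: linear_simps)
  next
    fix x
    have "norm (\<Sum>m. f m x) \<le> (\<Sum>m. norm (f m x))" using summable_norm[OF smn] .
    also have "\<dots> \<le> (\<Sum>m. onorm (f m) * norm x)"
      by (rule suminf_le[OF nb smn summable_mult2[OF sm]])
    also have "\<dots> = norm x * (\<Sum>m. onorm (f m))"
      using suminf_mult2[OF sm, of "norm x"] by (simp add: mult.commute)
    finally show "norm (\<Sum>m. f m x) \<le> norm x * (\<Sum>m. onorm (f m))" .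
  qed
qed

context ident begin

lemma ident_lim:
  assumes w: "w \<in> Ad" and \<sigma>: "\<sigma> \<ge> 0"
    and sm: "summable (\<lambda>m. \<sigma> ^ m / fact m * onorm (\<lambda>x. Cm m (T t0 x)))"
    and lim: "(\<lambda>n. \<sigma> ^ n / fact n * onorm (\<lambda>x. Cm (Suc n) (T t0 x))) \<longlonglongrightarrow> 0"
  shows "Cm 0 (T t0 (T \<sigma> w)) = T \<sigma> (Cm 0 (T t0 w) + (\<Sum>m. (\<sigma> ^ Suc m / fact (Suc m)) *\<^sub>R Cm (Suc m) (T t0 w)))"
proof -
  obtain M where M: "M > 0" "\<And>s. 0 \<le> s \<and> s \<le> \<sigma> \<Longrightarrow> onorm (T s) \<le> M" using bound by blast
  define f where "f m = (\<sigma> ^ m / fact m) *\<^sub>R Cm m (T t0 w)" for m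
  have fs: "summable f"
  proof (rule summable_comparison_test[OF _ summable_mult2[OF sm, of "norm w"]])
    have "norm (f m) \<le> \<sigma> ^ m / fact m * onorm (\<lambda>x. Cm m (T t0 x)) * norm w" for m
      using onorm[OF kbl[of m], of w] \<sigma> unfolding f_def
      by (simp add: mult.assoc mult_left_mono divide_right_mono)
    then show "\<exists>N. \<forall>n\<ge>N. norm (f n) \<le> \<sigma> ^ n / fact n * onorm (\<lambda>x. Cm n (T t0 x)) * norm w" by blast
  qed
  have P: "(\<lambda>n. \<Sum>m<Suc n. f m) \<longlonglongrightarrow> suminf f"
    using LIMSEQ_Suc[OF summable_LIMSEQ[OF fs]] .
  have sf: "suminf f = Cm 0 (T t0 w) + (\<Sum>m. (\<sigma> ^ Suc m / fact (Suc m)) *\<^sub>R Cm (Suc m) (T t0 w))"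
    using suminf_split_head[OF fs] by (simp add: f_def)
  have L1: "(\<lambda>n. T \<sigma> (\<Sum>m<Suc n. f m)) \<longlonglongrightarrow> T \<sigma> (suminf f)"
    using bounded_linear.tendsto[OF bl[OF \<sigma>] P] .
  have L2: "(\<lambda>n. T \<sigma> (\<Sum>m<Suc n. f m) - Cm 0 (T t0 (T \<sigma> w))) \<longlonglongrightarrow> 0"
  proof (rule Lim_null_comparison)
    show "\<forall>\<^sub>F n in sequentially. norm (T \<sigma> (\<Sum>m<Suc n. f m) - Cm 0 (T t0 (T \<sigma> w)))
        \<le> M * M * (\<sigma> ^ n / fact n * onorm (\<lambda>x. Cm (Suc n) (T t0 x))) * norm w * \<sigma>"
      using ident_fin[OF w \<sigma> M(2)] unfolding f_def by simp
    show "(\<lambda>n. M * M * (\<sigma> ^ n / fact n * onorm (\<lambda>x. Cm (Suc n) (T t0 x))) * norm w * \<sigma>) \<longlonglongrightarrow> 0"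
      using tendsto_mult_left_zero[OF tendsto_mult_left_zero[OF tendsto_mult_right_zero[OF lim, of "M * M"]], of "norm w" \<sigma>]
      by (simp add: mult.assoc)
  qed
  then have "(\<lambda>n. T \<sigma> (\<Sum>m<Suc n. f m)) \<longlonglongrightarrow> Cm 0 (T t0 (T \<sigma> w))"
    using Lim_transform2 tendsto_const by (metis (no_types) LIM_zero_cancel)
  with L1 have "T \<sigma> (suminf f) = Cm 0 (T t0 (T \<sigma> w))" using LIMSEQ_unique by blast
  then show ?thesis using sf by simp
qed

end



context ident begin

lemma J_bl:
  assumes \<sigma>: "\<sigma> \<ge> 0" and sm: "summable (\<lambda>m. \<sigma> ^ m / fact m * onorm (\<lambda>x. Cm m (T t0 x)))"
  shows "bounded_linear (\<lambda>w. \<Sum>m. (\<sigma> ^ Suc m / fact (Suc m)) *\<^sub>R Cm (Suc m) (T t0 w))"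
    "\<And>w. summable (\<lambda>m. (\<sigma> ^ Suc m / fact (Suc m)) *\<^sub>R Cm (Suc m) (T t0 w))"
proof -
  define f where "f m = (\<lambda>x. (\<sigma> ^ Suc m / fact (Suc m)) *\<^sub>R Cm (Suc m) (T t0 x))" for m
  have blf: "bounded_linear (f m)" for m
    unfolding f_def using bounded_linear_compose[OF bounded_linear_scaleR_right kbl[of "Suc m"]] by (simp add: o_def)
  have on: "onorm (f m) = \<sigma> ^ Suc m / fact (Suc m) * onorm (\<lambda>x. Cm (Suc m) (T t0 x))" for m
    unfolding f_def using onorm_scaleR[OF kbl[of "Suc m"], of "\<sigma> ^ Suc m / fact (Suc m)"] \<sigma> by simp
  have "summable (\<lambda>m. onorm (f m))"
    unfolding on using sm summable_Suc_iff[of "\<lambda>m. \<sigma> ^ m / fact m * onorm (\<lambda>x. Cm m (T t0 x))"] by simp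
  from suminf_bl[OF blf this]
  show "bounded_linear (\<lambda>w. \<Sum>m. (\<sigma> ^ Suc m / fact (Suc m)) *\<^sub>R Cm (Suc m) (T t0 w))"
    "\<And>w. summable (\<lambda>m. (\<sigma> ^ Suc m / fact (Suc m)) *\<^sub>R Cm (Suc m) (T t0 w))"
    unfolding f_def by auto
qed

lemma ident_all:
  assumes dense: "closure Ad = UNIV" and \<sigma>: "\<sigma> \<ge> 0"
    and sm: "summable (\<lambda>m. \<sigma> ^ m / fact m * onorm (\<lambda>x. Cm m (T t0 x)))"
    and lim: "(\<lambda>n. \<sigma> ^ n / fact n * onorm (\<lambda>x. Cm (Suc n) (T t0 x))) \<longlonglongrightarrow> 0"
  shows "Cm 0 (T t0 (T \<sigma> w)) = T \<sigma> (Cm 0 (T t0 w) + (\<Sum>m. (\<sigma> ^ Suc m / fact (Suc m)) *\<^sub>R Cm (Suc m) (T t0 w)))"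
proof -
  define L where "L w = Cm 0 (T t0 (T \<sigma> w))" for w
  define R where "R w = T \<sigma> (Cm 0 (T t0 w) + (\<Sum>m. (\<sigma> ^ Suc m / fact (Suc m)) *\<^sub>R Cm (Suc m) (T t0 w)))" for w
  have blL: "bounded_linear L"
    using bounded_linear_compose[OF kbl[of 0] bl[OF \<sigma>]] by (simp add: L_def[abs_def] o_def)
  have blR: "bounded_linear R"
    using bounded_linear_compose[OF bl[OF \<sigma>] bounded_linear_add[OF kbl[of 0] J_bl(1)[OF \<sigma> sm]]]
    by (simp add: R_def[abs_def] o_def)
  have "closed {w. L w = R w}"
    by (intro closed_Collect_eq linear_continuous_on blL blR)
  moreover have "Ad \<subseteq> {w. L w = R w}"
    using ident_lim[OF _ \<sigma> sm lim] by (auto simp: L_def R_def)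
  ultimately have "closure Ad \<subseteq> {w. L w = R w}" by (rule closure_minimal[rotated])
  then show ?thesis using dense by (auto simp: L_def R_def)
qed

end



lemma pow_fact_exp: "(x::real) \<ge> 0 \<Longrightarrow> x ^ n / fact n \<le> exp x"
proof -
  assume x: "x \<ge> 0"
  have s: "(\<lambda>n. x ^ n / fact n) sums exp x" using exp_converges[of x] by (simp add: divide_inverse_commute)
  have "sum (\<lambda>n. x ^ n / fact n) {n} \<le> (\<Sum>n. x ^ n / fact n)"
    by (rule sum_le_suminf) (use s x in \<open>auto simp: sums_iff\<close>)
  then show ?thesis using s by (simp add: sums_iff)
qed

lemma num_main:
  fixes a :: "nat \<Rightarrow> real" and chi :: real
  assumes a: "\<And>m. a m \<ge> 0" and chi: "chi > 0"
    and ls: "ereal (2 * exp 1 * chi) * limsup (\<lambda>m. ereal (root m (a m) / real m)) < 1"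
  shows "\<exists>q. 0 \<le> q \<and> q < 1 \<and> (\<exists>N. \<forall>m\<ge>N. (2 * chi) ^ m * a m / fact m \<le> q ^ m)"
proof -
  define c where "c = 2 * exp 1 * chi"
  have c: "c > 0" using chi by (simp add: c_def)
  define Ls where "Ls = limsup (\<lambda>m. ereal (root m (a m) / real m))"
  have "Ls < ereal (1 / c)"
  proof (cases Ls)
    case (real l)
    then have "c * l < 1" using ls by (simp add: c_def Ls_def)
    then have "l < 1 / c" using c by (simp add: field_simps)
    then show ?thesis using real by simp
  next
    case PInf
    have "0 < ereal (2 * exp 1 * chi)" using c by (simp add: c_def)
    then show ?thesis using ls c PInf chi by (simp add: c_def Ls_def)
  next
    case MInf
    then show ?thesis by simp
  qed
  then obtain z where z: "Ls < ereal z" "ereal z < ereal (1 / c)" using ereal_dense2 by blast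
  define L where "L = max z (1 / (2 * c))"
  have L1: "L \<ge> z" "L \<ge> 1 / (2 * c)" by (auto simp: L_def)
  have L2: "1 / (2 * c) < 1 / c" using c by (simp add: field_simps)
  have L: "Ls < ereal L" "L < 1 / c" "L > 0"
  proof -
    show "Ls < ereal L" using z(1) L1(1) less_le_trans by fastforce
    show "L < 1 / c" using z(2) L2 by (simp add: L_def)
    show "L > 0" using L1(2) c by (smt (verit) divide_pos_pos)
  qed
  have ev: "eventually (\<lambda>m. ereal (root m (a m) / real m) < ereal L) sequentially"
    using Limsup_lessD[OF L(1)[unfolded Ls_def]] .
  then obtain N where N: "\<And>m. m \<ge> N \<Longrightarrow> root m (a m) / real m < L"
    unfolding eventually_sequentially by auto
  define q where "q = c * L"
  have q: "0 \<le> q" "q < 1" using L c by (auto simp: q_def field_simps)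
  have "(2 * chi) ^ m * a m / fact m \<le> q ^ m" if m: "m \<ge> Suc N" for m
  proof -
    have m0: "m > 0" "m \<ge> N" using m by auto
    have "root m (a m) < L * real m" using N[OF m0(2)] m0 by (simp add: field_simps)
    then have "root m (a m) ^ m \<le> (L * real m) ^ m"
      using a[of m] real_root_ge_zero[of "a m" m] by (intro power_mono) auto
    then have am: "a m \<le> (L * real m) ^ m" using real_root_pow_pos2[OF m0(1) a[of m]] by simp
    have "(2 * chi) ^ m * a m / fact m \<le> (2 * chi) ^ m * (L * real m) ^ m / fact m"
      using am chi by (intro divide_right_mono mult_left_mono) auto
    also have "\<dots> = (2 * chi * L) ^ m * (real m ^ m / fact m)"
      by (simp add: power_mult_distrib)
    also have "\<dots> \<le> (2 * chi * L) ^ m * exp (real m)"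
      using pow_fact_exp[of "real m" m] chi L by (intro mult_left_mono) auto
    also have "\<dots> = q ^ m"
      by (simp add: q_def c_def power_mult_distrib exp_of_nat_mult[symmetric] algebra_simps)
    finally show ?thesis .
  qed
  then show ?thesis using q by blast
qed

lemma num:
  fixes a :: "nat \<Rightarrow> real" and chi \<sigma> :: real
  assumes a: "\<And>m. a m \<ge> 0" and chi: "chi \<ge> 0"
    and ls: "ereal (2 * exp 1 * chi) * limsup (\<lambda>m. ereal (root m (a m) / real m)) < 1"
    and \<sigma>: "0 \<le> \<sigma>" "\<sigma> \<le> 2 * chi"
  shows "summable (\<lambda>m. \<sigma> ^ m / fact m * a m)" "(\<lambda>n. \<sigma> ^ n / fact n * a (Suc n)) \<longlonglongrightarrow> 0"
proof -
  have "summable (\<lambda>m. \<sigma> ^ m / fact m * a m) \<and> (\<lambda>n. \<sigma> ^ n / fact n * a (Suc n)) \<longlonglongrightarrow> 0"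
  proof (cases "chi = 0")
    case True
    then have s0: "\<sigma> = 0" using \<sigma> by simp
    have e0: "\<And>m. m \<ge> 1 \<Longrightarrow> \<sigma> ^ m / fact m * a m = 0" using s0 by simp
    have "summable (\<lambda>m. \<sigma> ^ m / fact m * a m)"
      by (rule summable_comparison_test'[of "\<lambda>_. 0" 1]) (use s0 in \<open>simp_all add: power_0_left\<close>)
    moreover have "(\<lambda>n. \<sigma> ^ n / fact n * a (Suc n)) \<longlonglongrightarrow> 0"
      by (rule Lim_null_comparison[of _ "\<lambda>_. 0"]) (use s0 in \<open>auto simp: eventually_sequentially power_0_left intro!: exI[of _ 1]\<close>)
    ultimately show ?thesis by blast
  next
    case False
    then have chip: "chi > 0" using chi by simp
    obtain q N where q: "0 \<le> q" "q < 1" and N: "\<And>m. m \<ge> N \<Longrightarrow> (2 * chi) ^ m * a m / fact m \<le> q ^ m"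
      using num_main[OF a chip ls] by blast
    have pw: "\<sigma> ^ m \<le> (2 * chi) ^ m" for m using \<sigma> by (intro power_mono) auto
    have le: "\<sigma> ^ m / fact m * a m \<le> (2 * chi) ^ m * a m / fact m" for m
    proof -
      have "\<sigma> ^ m * a m \<le> (2 * chi) ^ m * a m" using pw a[of m] by (rule mult_right_mono)
      then show ?thesis by (simp add: divide_right_mono)
    qed
    have "summable (\<lambda>m. \<sigma> ^ m / fact m * a m)"
    proof (rule summable_comparison_test'[OF summable_geometric[of q] ])
      show "norm q < 1" using q by simp
      fix m assume "m \<ge> N"
      then show "norm (\<sigma> ^ m / fact m * a m) \<le> q ^ m"
        using le[of m] N[of m] \<sigma> a[of m] by simp
    qed
    moreover have "(\<lambda>n. \<sigma> ^ n / fact n * a (Suc n)) \<longlonglongrightarrow> 0"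
    proof (rule Lim_null_comparison)
      have "(\<lambda>n. real (Suc n) * q ^ Suc n) \<longlonglongrightarrow> 0"
        using LIMSEQ_Suc[OF powser_times_n_limit_0[of q]] q by simp
      then show "(\<lambda>n. real (Suc n) * q ^ Suc n / (2 * chi)) \<longlonglongrightarrow> 0"
        using tendsto_divide_zero by blast
      have "norm (\<sigma> ^ n / fact n * a (Suc n)) \<le> real (Suc n) * q ^ Suc n / (2 * chi)" if n: "n \<ge> N" for n
      proof -
        have "norm (\<sigma> ^ n / fact n * a (Suc n)) = \<sigma> ^ n / fact n * a (Suc n)" using \<sigma> a by simp
        also have "\<dots> \<le> (2 * chi) ^ n / fact n * a (Suc n)"
          using pw[of n] a[of "Suc n"] by (intro mult_right_mono divide_right_mono) auto
        also have "\<dots> = real (Suc n) * ((2 * chi) ^ Suc n * a (Suc n) / fact (Suc n)) / (2 * chi)"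
          using chip by (simp add: field_simps del: of_nat_Suc)
        also have "\<dots> \<le> real (Suc n) * q ^ Suc n / (2 * chi)"
          using N[of "Suc n"] n chip by (intro divide_right_mono mult_left_mono) auto
        finally show ?thesis .
      qed
      then show "\<forall>\<^sub>F n in sequentially. norm (\<sigma> ^ n / fact n * a (Suc n)) \<le> real (Suc n) * q ^ Suc n / (2 * chi)"
        unfolding eventually_sequentially by blast
    qed
    ultimately show ?thesis by blast
  qed
  then show "summable (\<lambda>m. \<sigma> ^ m / fact m * a m)" "(\<lambda>n. \<sigma> ^ n / fact n * a (Suc n)) \<longlonglongrightarrow> 0" by auto
qed




lemma closure_app:
  assumes "is_closure_of G H" "x \<in> fst H"
  shows "app G x = snd H x"
proof -
  have "(x, snd H x) \<in> graph H" using assms(2) by (auto simp: graph_def dom_def app_def)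
  then have "(x, snd H x) \<in> graph G" using assms(1) closure_subset unfolding is_closure_of_def by blast
  then show ?thesis by (auto simp: graph_def)
qed

lemma imp_sol_eq:
  assumes sm: "strict_mono tau" and t: "tau k < t" "t \<le> tau (Suc k)"
  shows "imp_sol T tau J x t = T (t - tau k) (post T tau J x k)"
proof -
  have mono: "mono tau" using sm strict_mono_mono by blast
  have t0: "\<not> t \<le> tau 0" using t mono[unfolded mono_def, rule_format, of 0 k] by auto
  have "(LEAST k. t \<le> tau (Suc k)) = k"
  proof (rule Least_equality)
    show "t \<le> tau (Suc k)" using t by simp
    fix y assume y: "t \<le> tau (Suc y)"
    show "k \<le> y"
    proof (rule ccontr)
      assume "\<not> k \<le> y"
      then have "Suc y \<le> k" by simp
      then have "tau (Suc y) \<le> tau k" using mono by (simp add: monoD)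
      then show False using y t by simp
    qed
  qed
  then show ?thesis using t0 by (simp add: imp_sol_def Let_def)
qed

lemma imp_sol_le:
  assumes "t \<le> tau 0" shows "imp_sol T tau J x t = x"
  using assms by (simp add: imp_sol_def)

lemma exists_interval:
  fixes tau :: "nat \<Rightarrow> real"
  assumes sm: "strict_mono tau" and t: "tau 0 < t" and ex: "\<exists>n. t \<le> tau n"
  shows "\<exists>k. tau k < t \<and> t \<le> tau (Suc k)"
proof -
  define n where "n = (LEAST n. t \<le> tau n)"
  have n: "t \<le> tau n" using ex LeastI_ex unfolding n_def by metis
  have "n \<noteq> 0"
  proof
    assume "n = 0" then show False using n t by simp
  qed
  then obtain k where k: "n = Suc k" using not0_implies_Suc by blast
  have "\<not> t \<le> tau k" using not_less_Least[of k "\<lambda>n. t \<le> tau n"] k unfolding n_def by simp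
  then have "tau k < t" by simp
  then show ?thesis using n k by blast
qed

lemma post_bl:
  assumes "\<And>k. bounded_linear (\<lambda>x. J (Suc k) (T (tau (Suc k) - tau k) x))"
  shows "bounded_linear (\<lambda>x. post T tau J x k)"
proof (induction k)
  case 0 then show ?case by (simp add: bounded_linear_ident)
next
  case (Suc k)
  then show ?case using bounded_linear_compose[OF assms[of k] Suc] by (simp add: o_def)
qed

lemma imp_sol_bl:
  assumes bl: "\<And>t. t \<ge> 0 \<Longrightarrow> bounded_linear (T t)" and sm: "strict_mono tau"
    and pbl: "\<And>k. bounded_linear (\<lambda>x. post T tau J x k)"
    and ex: "\<exists>n. t \<le> tau n"
  shows "bounded_linear (\<lambda>x. imp_sol T tau J x t)"
proof (cases "t \<le> tau 0")
  case True then show ?thesis by (simp add: imp_sol_le bounded_linear_ident)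
next
  case False
  then obtain k where k: "tau k < t" "t \<le> tau (Suc k)" using exists_interval[OF sm _ ex] by force
  have "(\<lambda>x. imp_sol T tau J x t) = T (t - tau k) \<circ> (\<lambda>x. post T tau J x k)"
    by (simp add: fun_eq_iff imp_sol_eq[OF sm k])
  moreover have "bounded_linear (T (t - tau k) \<circ> (\<lambda>x. post T tau J x k))"
    using bounded_linear_compose[OF bl[of "t - tau k"] pbl[of k]] k by (simp add: o_def)
  ultimately show ?thesis by simp
qed

lemma ext_stab:
  fixes F :: "'a::banach \<Rightarrow> real \<Rightarrow> 'b::real_normed_vector"
  assumes bl: "\<And>t. bounded_linear (\<lambda>z. F z t)" and dense: "closure D = UNIV"
    and st: "\<forall>\<epsilon>>0. \<exists>\<delta>>0. \<forall>z\<in>D. norm z < \<delta> \<longrightarrow> (\<forall>t\<ge>t0. norm (F z t) < \<epsilon>)"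
    and at: "\<forall>z\<in>D. ((\<lambda>t. F z t) \<longlongrightarrow> 0) at_top"
  shows "\<forall>\<epsilon>>0. \<exists>\<delta>>0. \<forall>z. norm z < \<delta> \<longrightarrow> (\<forall>t\<ge>t0. norm (F z t) \<le> \<epsilon>)"
    and "\<forall>z. ((\<lambda>t. F z t) \<longlongrightarrow> 0) at_top"
proof -
  show S: "\<forall>\<epsilon>>0. \<exists>\<delta>>0. \<forall>z. norm z < \<delta> \<longrightarrow> (\<forall>t\<ge>t0. norm (F z t) \<le> \<epsilon>)"
  proof (intro allI impI)
    fix \<epsilon> :: real assume e: "\<epsilon> > 0"
    then obtain \<delta> where d: "\<delta> > 0" "\<And>z t. z \<in> D \<Longrightarrow> norm z < \<delta> \<Longrightarrow> t \<ge> t0 \<Longrightarrow> norm (F z t) < \<epsilon>"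
      using st by blast
    have "norm (F z t) \<le> \<epsilon>" if z: "norm z < \<delta>" and t: "t \<ge> t0" for z t
    proof -
      have cl: "closed {z. norm (F z t) \<le> \<epsilon>}"
        by (intro closed_Collect_le continuous_intros linear_continuous_on[OF bl])
      have "ball 0 \<delta> \<inter> D \<subseteq> {z. norm (F z t) \<le> \<epsilon>}" using d t by (auto simp: less_imp_le)
      then have "closure (ball 0 \<delta> \<inter> D) \<subseteq> {z. norm (F z t) \<le> \<epsilon>}" using cl by (rule closure_minimal)
      moreover have "ball 0 \<delta> \<inter> closure D \<subseteq> closure (ball 0 \<delta> \<inter> D)"
        by (rule open_Int_closure_subset) simp
      moreover have "z \<in> ball 0 \<delta> \<inter> closure D" using z dense by simp
      ultimately show ?thesis by blast
    qed
    then show "\<exists>\<delta>>0. \<forall>z. norm z < \<delta> \<longrightarrow> (\<forall>t\<ge>t0. norm (F z t) \<le> \<epsilon>)" using d(1) by blast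
  qed
  show "\<forall>z. ((\<lambda>t. F z t) \<longlongrightarrow> 0) at_top"
  proof (intro allI)
    fix z
    show "((\<lambda>t. F z t) \<longlongrightarrow> 0) at_top"
    proof (rule tendstoI)
      fix \<epsilon> :: real assume e: "\<epsilon> > 0"
      have e3: "\<epsilon> / 3 > 0" using e by simp
      obtain \<delta> where d: "\<delta> > 0" "\<And>z t. norm z < \<delta> \<Longrightarrow> t \<ge> t0 \<Longrightarrow> norm (F z t) \<le> \<epsilon> / 3"
        using S[rule_format, OF e3] by blast
      have "z \<in> closure D" using dense by simp
      then obtain w where w: "w \<in> D" "dist w z < \<delta>" using closure_approachable d(1) by blast
      have "eventually (\<lambda>t. dist (F w t) 0 < \<epsilon> / 3) at_top"
        using tendstoD[OF at[rule_format, OF w(1)] e3] .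
      moreover have "eventually (\<lambda>t. t \<ge> t0) at_top" by (rule eventually_ge_at_top)
      ultimately show "eventually (\<lambda>t. dist (F z t) 0 < \<epsilon>) at_top"
      proof eventually_elim
        case (elim t)
        have "F (z - w) t = F z t - F w t"
          using linear_diff[OF bounded_linear.linear[OF bl[of t]], of z w] by simp
        then have "F z t = F w t + F (z - w) t" by simp
        moreover have "norm (F (z - w) t) \<le> \<epsilon> / 3" using d(2)[of "z - w" t] w(2) elim
          by (simp add: dist_norm norm_minus_commute)
        ultimately have "norm (F z t) \<le> norm (F w t) + \<epsilon> / 3"
          using norm_triangle_ineq[of "F w t" "F (z - w) t"] by simp
        then show ?case using elim e by simp
      qed
    qed
  qed
qed


theorem theorem1:
  fixes cs :: "complex \<Rightarrow> 'a::banach \<Rightarrow> 'a"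
    and A B :: "'a opr" and T :: "real \<Rightarrow> 'a \<Rightarrow> 'a" and C :: "nat \<Rightarrow> 'a opr"
    and a \<phi> K \<eta> K1 \<theta> \<chi>max :: real and tau :: "nat \<Rightarrow> real"
  assumes cs: "complex_scaling cs"
    and sect: "sectorial_with cs A a \<phi> K"
    and gen: "generates_semigroup A T"
    and B_lin: "lin_op cs B" and B_closed: "closed_op B"
    and B_dom: "dom A \<subseteq> dom B" and B_inv: "app B ` dom A \<subseteq> dom A"
    and comm: "nested_commutators A B C"
    and comm_inv: "\<And>m. app (C m) ` dom A \<subseteq> dom A"
    and \<eta>: "\<eta> > 0" and K1: "K1 > 0"
    and comm_bound: "\<And>m l. l \<in> sector a \<phi> \<Longrightarrow>
          bounded_linear (app (C m) \<circ> resolvent cs A l) \<and>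
          onorm (app (C m) \<circ> resolvent cs A l) \<le> K1 * \<eta> ^ m / cmod (l - complex_of_real a)"
    and tau_mono: "strict_mono tau" and tau_lim: "filterlim tau at_top sequentially"
    and \<theta>: "\<theta> > 0" and \<chi>max: "0 \<le> \<chi>max" "\<chi>max < \<theta>"
    and dwell: "\<And>k. \<bar>tau k - tau 0 - real k * \<theta>\<bar> \<le> \<chi>max"
    and commT: "\<And>m. range (T (\<theta> - \<chi>max)) \<subseteq> dom (C m) \<and>
                      bounded_linear (app (C m) \<circ> T (\<theta> - \<chi>max))"
    and limsup: "ereal (2 * exp 1 * \<chi>max) *
          limsup (\<lambda>m. ereal (root m (onorm (app (C m) \<circ> T (\<theta> - \<chi>max))) / real m)) < 1"
    and stableC: "asym_stable T (\<lambda>k. real k * \<theta>)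
          (\<lambda>k z. app B z + (\<Sum>m. ((\<chi>max + (tau (Suc k) - tau 0 - real (Suc k) * \<theta>)) ^ Suc m
                                    / fact (Suc m)) *\<^sub>R app (C (Suc m)) z))
          (dom A)"
  shows "asym_stable T tau (\<lambda>k. app B) (dom A)"
proof -
  have cs_real: "\<And>r x. cs (complex_of_real r) x = r *\<^sub>R x" using cs by (simp add: complex_scaling_def)
  have linA: "lin_op cs A" and dense: "closure (dom A) = UNIV"
    using sect by (auto simp: sectorial_with_def densely_defined_def)
  have Ad_add: "\<And>x y. x \<in> dom A \<Longrightarrow> y \<in> dom A \<Longrightarrow> x + y \<in> dom A \<and> app A (x + y) = app A x + app A y"
    using linA by (simp add: lin_op_def)
  have Ad_scale: "\<And>x c. x \<in> dom A \<Longrightarrow> c *\<^sub>R x \<in> dom A \<and> app A (c *\<^sub>R x) = c *\<^sub>R app A x"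
  proof -
    fix x c assume x: "x \<in> dom A"
    have "cs (complex_of_real c) x \<in> dom A \<and> app A (cs (complex_of_real c) x) = cs (complex_of_real c) (app A x)"
      using linA x unfolding lin_op_def by blast
    then show "c *\<^sub>R x \<in> dom A \<and> app A (c *\<^sub>R x) = c *\<^sub>R app A x" by (simp add: cs_real)
  qed
  have Ad_zero: "0 \<in> dom A" using linA by (simp add: lin_op_def)
  have csgT: "csg T" by (rule csg.intro) (use gen in \<open>auto simp: generates_semigroup_def\<close>)
  interpret csg T by (rule csgT)
  have domA: "dom A = {x. \<exists>y. gen_at x y}" and genA: "\<And>x. x \<in> dom A \<Longrightarrow> gen_at x (app A x)"
    using gen by (simp_all add: generates_semigroup_def gen_at_def)
  have Ad_T: "\<And>x t. x \<in> dom A \<Longrightarrow> t \<ge> 0 \<Longrightarrow> T t x \<in> dom A"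
    using gen_at_T genA domA by blast
  have A_T: "\<And>x t. x \<in> dom A \<Longrightarrow> t \<ge> 0 \<Longrightarrow> app A (T t x) = T t (app A x)"
  proof -
    fix x t assume x: "x \<in> dom A" and t: "(t::real) \<ge> 0"
    have "gen_at (T t x) (app A (T t x))" using genA Ad_T x t by blast
    moreover have "gen_at (T t x) (T t (app A x))" using gen_at_T genA x t by blast
    ultimately show "app A (T t x) = T t (app A x)"
      unfolding gen_at_def using tendsto_unique trivial_limit_at_right_real by blast
  qed
  define t0 where "t0 = \<theta> - \<chi>max"
  have t0: "t0 > 0" using \<chi>max by (simp add: t0_def)
  have C0: "C 0 = B" using comm by (simp add: nested_commutators_def)
  have comm_eq: "\<And>x m. x \<in> dom A \<Longrightarrow> app (C (Suc m)) x = app (C m) (app A x) - app A (app (C m) x)"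
  proof -
    fix x m assume x: "x \<in> dom A"
    have "dom A \<subseteq> hatD A (C m)" and cl: "is_closure_of (C (Suc m))
            (hatD A (C m), \<lambda>x. app (C m) (app A x) - app A (app (C m) x))"
      using comm by (auto simp: nested_commutators_def)
    then show "app (C (Suc m)) x = app (C m) (app A x) - app A (app (C m) x)"
      using closure_app[OF cl] x by auto
  qed
  have kbl: "\<And>m. bounded_linear (\<lambda>x. app (C m) (T t0 x))"
    using commT by (simp add: t0_def comp_def)
  have Ad_C: "\<And>x m. x \<in> dom A \<Longrightarrow> app (C m) x \<in> dom A" using comm_inv by blast
  interpret I: ident T "dom A" "app A" "\<lambda>m. app (C m)" t0
    by (intro ident.intro csgT ident_axioms.intro) (use genA Ad_T A_T Ad_C comm_eq Ad_add Ad_scale Ad_zero t0 kbl in auto)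
  define a where "a m = onorm (\<lambda>x. app (C m) (T t0 x))" for m
  have a0: "\<And>m. a m \<ge> 0" unfolding a_def using kbl onorm_pos_le by blast
  have ls: "ereal (2 * exp 1 * \<chi>max) * limsup (\<lambda>m. ereal (root m (a m) / real m)) < 1"
    using limsup by (simp add: a_def t0_def comp_def)
  have IDL: "\<And>s w. 0 \<le> s \<Longrightarrow> s \<le> 2 * \<chi>max \<Longrightarrow> app B (T (s + t0) w) =
      T s (app B (T t0 w) + (\<Sum>m. (s ^ Suc m / fact (Suc m)) *\<^sub>R app (C (Suc m)) (T t0 w)))"
  proof -
    fix s w assume s: "0 \<le> s" "s \<le> 2 * \<chi>max"
    note n = num[OF a0 \<chi>max(1) ls s, unfolded a_def]
    have "app (C 0) (T t0 (T s w)) =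
      T s (app (C 0) (T t0 w) + (\<Sum>m. (s ^ Suc m / fact (Suc m)) *\<^sub>R app (C (Suc m)) (T t0 w)))"
      using I.ident_all[OF dense s(1) n] by simp
    moreover have "T t0 (T s w) = T (s + t0) w" using Tapp[of t0 s] t0 s by (simp add: add.commute)
    ultimately show "?thesis s w" using C0 by simp
  qed
  have JBL: "\<And>s. 0 \<le> s \<Longrightarrow> s \<le> 2 * \<chi>max \<Longrightarrow>
      bounded_linear (\<lambda>w. app B (T t0 w) + (\<Sum>m. (s ^ Suc m / fact (Suc m)) *\<^sub>R app (C (Suc m)) (T t0 w)))"
  proof -
    fix s assume s: "0 \<le> s" "s \<le> 2 * \<chi>max"
    note n = num[OF a0 \<chi>max(1) ls s, unfolded a_def]
    show "?thesis s" using bounded_linear_add[OF kbl[of 0] I.J_bl(1)[OF s(1) n(1)]] C0 by simp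
  qed
  define \<sigma> where "\<sigma> k = \<chi>max + (tau k - tau 0 - real k * \<theta>)" for k
  have \<sigma>b: "\<And>k. 0 \<le> \<sigma> k \<and> \<sigma> k \<le> 2 * \<chi>max" using dwell by (simp add: \<sigma>_def abs_le_iff) (smt (verit) dwell)
  define Jk where "Jk k z = app B z + (\<Sum>m. (\<sigma> (Suc k) ^ Suc m / fact (Suc m)) *\<^sub>R app (C (Suc m)) z)" for k z
  have JkE: "(\<lambda>k z. app B z + (\<Sum>m. ((\<chi>max + (tau (Suc k) - tau 0 - real (Suc k) * \<theta>)) ^ Suc m
                                    / fact (Suc m)) *\<^sub>R app (C (Suc m)) z)) = Jk"
    unfolding Jk_def \<sigma>_def by (rule refl)
  have stC: "asym_stable T (\<lambda>k. real k * \<theta>) Jk (dom A)" using stableC unfolding JkE .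
  have tauS: "strict_mono (\<lambda>k. real k * \<theta>)" using \<theta> by (simp add: strict_mono_def)
  have \<theta>0: "\<theta> \<ge> 0" using \<theta> by simp
  have Tth: "\<And>q. T t0 (T \<chi>max q) = T \<theta> q" using Tapp[of t0 \<chi>max] t0 \<chi>max by (simp add: t0_def)
  have JkT: "\<And>k. bounded_linear (\<lambda>x. Jk k (T \<theta> x))"
  proof -
    fix k
    have "bounded_linear (\<lambda>x. (\<lambda>w. app B (T t0 w) + (\<Sum>m. (\<sigma> (Suc k) ^ Suc m / fact (Suc m)) *\<^sub>R app (C (Suc m)) (T t0 w))) (T \<chi>max x))"
      by (rule bounded_linear_compose[OF JBL[OF conjunct1[OF \<sigma>b[of "Suc k"]] conjunct2[OF \<sigma>b[of "Suc k"]]] bl[OF \<chi>max(1)]])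
    then show "bounded_linear (\<lambda>x. Jk k (T \<theta> x))" by (simp only: Jk_def Tth)
  qed
  define Q where "Q z j = post T (\<lambda>k. real k * \<theta>) Jk z j" for z j
  define Z where "Z z t = imp_sol T (\<lambda>k. real k * \<theta>) Jk z t" for z t
  have Qstep: "\<And>z j. Q z (Suc j) = Jk (Suc j) (T \<theta> (Q z j))"
    by (simp add: Q_def algebra_simps)
  have Qbl: "\<And>j. bounded_linear (\<lambda>z. Q z j)"
    unfolding Q_def by (rule post_bl) (simp add: algebra_simps JkT)
  have exn: "\<And>t. \<exists>n. t \<le> real n * \<theta>"
  proof -
    fix t
    obtain n :: nat where n: "t / \<theta> < real n" using reals_Archimedean2[of "t / \<theta>"] by blast
    have "t < real n * \<theta>" using n \<theta> by (simp add: divide_less_eq)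
    then show "\<exists>n. t \<le> real n * \<theta>" by (intro exI[of _ n]) simp
  qed
  have Zbl: "\<And>t. bounded_linear (\<lambda>z. Z z t)"
  proof -
    fix t
    have pb: "\<And>k. bounded_linear (\<lambda>x. post T (\<lambda>k. real k * \<theta>) Jk x k)"
      using Qbl by (simp add: Q_def)
    show "bounded_linear (\<lambda>z. Z z t)"
      unfolding Z_def by (rule imp_sol_bl[OF bl tauS pb exn])
  qed
  have ZQ: "\<And>z j s. real j * \<theta> < s \<Longrightarrow> s \<le> real (Suc j) * \<theta> \<Longrightarrow> Z z s = T (s - real j * \<theta>) (Q z j)"
  proof -
    fix z j s assume h: "real j * \<theta> < s" "s \<le> real (Suc j) * \<theta>"
    show "Z z s = T (s - real j * \<theta>) (Q z j)"
      unfolding Z_def Q_def using imp_sol_eq[OF tauS, of j s] h by simp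
  qed
  have stC1: "\<forall>\<epsilon>>0. \<exists>\<delta>>0. \<forall>z\<in>dom A. norm z < \<delta> \<longrightarrow> (\<forall>t\<ge>0. norm (Z z t) < \<epsilon>)"
    using stC by (simp add: asym_stable_def Z_def)
  have stC2: "\<forall>z\<in>dom A. ((\<lambda>t. Z z t) \<longlongrightarrow> 0) at_top"
    using stC by (simp add: asym_stable_def Z_def)
  note ZS = ext_stab(1)[OF Zbl dense stC1 stC2] and ZA = ext_stab(2)[OF Zbl dense stC1 stC2]
  define P where "P x0 j = post T tau (\<lambda>k. app B) x0 j" for x0 j
  define zf where "zf x0 = Jk 0 (T t0 x0)" for x0
  have tau_inc: "\<And>j. tau (Suc j) - tau j > 0" using tau_mono by (simp add: strict_mono_def)
  have PQ: "\<And>x0 j. P x0 (Suc j) = T (\<sigma> (Suc j)) (Q (zf x0) j)"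
  proof -
    fix x0 j
    show "P x0 (Suc j) = T (\<sigma> (Suc j)) (Q (zf x0) j)"
    proof (induction j)
      case 0
      have e: "tau (Suc 0) - tau 0 = \<sigma> (Suc 0) + t0" by (simp add: \<sigma>_def t0_def)
      show ?case using IDL[OF conjunct1[OF \<sigma>b] conjunct2[OF \<sigma>b], of "Suc 0" x0]
        by (simp add: P_def Q_def zf_def Jk_def e)
    next
      case (Suc j)
      have d: "tau (Suc (Suc j)) - tau (Suc j) \<ge> 0" using tau_inc[of "Suc j"] by simp
      have e: "tau (Suc (Suc j)) - tau (Suc j) + \<sigma> (Suc j) = \<sigma> (Suc (Suc j)) + t0 + \<chi>max"
        by (simp add: \<sigma>_def t0_def algebra_simps)
      have "P x0 (Suc (Suc j)) = app B (T (tau (Suc (Suc j)) - tau (Suc j)) (P x0 (Suc j)))"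
        by (simp add: P_def)
      also have "\<dots> = app B (T (tau (Suc (Suc j)) - tau (Suc j) + \<sigma> (Suc j)) (Q (zf x0) j))"
        using Suc Tapp[OF d conjunct1[OF \<sigma>b]] by simp
      also have "\<dots> = app B (T (\<sigma> (Suc (Suc j)) + t0) (T \<chi>max (Q (zf x0) j)))"
        unfolding e using Tapp[of "\<sigma> (Suc (Suc j)) + t0" \<chi>max] \<sigma>b t0 \<chi>max by simp
      also have "\<dots> = T (\<sigma> (Suc (Suc j))) (Jk (Suc j) (T \<theta> (Q (zf x0) j)))"
        using IDL[OF conjunct1[OF \<sigma>b] conjunct2[OF \<sigma>b], of "Suc (Suc j)" "T \<chi>max (Q (zf x0) j)"]
        by (simp add: Jk_def Tth)
      also have "\<dots> = T (\<sigma> (Suc (Suc j))) (Q (zf x0) (Suc j))" by (simp add: Qstep)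
      finally show ?case .
    qed
  qed
  obtain M0 where M0: "M0 > 0" "\<And>r. 0 \<le> r \<and> r \<le> \<theta> + 2 * \<chi>max \<Longrightarrow> onorm (T r) \<le> M0"
    using bound by blast
  define M where "M = max M0 1"
  have M: "M \<ge> 1" "\<And>r. 0 \<le> r \<Longrightarrow> r \<le> \<theta> + 2 * \<chi>max \<Longrightarrow> onorm (T r) \<le> M"
  proof -
    show "M \<ge> 1" by (simp add: M_def)
    fix r assume "0 \<le> r" "r \<le> \<theta> + 2 * \<chi>max"
    then have "onorm (T r) \<le> M0" using M0(2) by blast
    then show "onorm (T r) \<le> M" by (simp add: M_def)
  qed
  have TM: "\<And>r y. 0 \<le> r \<Longrightarrow> r \<le> \<theta> + 2 * \<chi>max \<Longrightarrow> norm (T r y) \<le> M * norm y"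
  proof -
    fix r y assume r: "0 \<le> (r::real)" "r \<le> \<theta> + 2 * \<chi>max"
    have "norm (T r y) \<le> onorm (T r) * norm y" using Tnorm r by blast
    also have "\<dots> \<le> M * norm y" using M(2)[OF r] by (intro mult_right_mono) auto
    finally show "norm (T r y) \<le> M * norm y" .
  qed
  have exT: "\<And>t. \<exists>n. t \<le> tau n"
    using tau_lim unfolding filterlim_at_top eventually_sequentially by blast
  have KL: "\<And>x0 t. tau 0 < t \<Longrightarrow>
      (t \<le> tau (Suc 0) \<and> norm (imp_sol T tau (\<lambda>k. app B) x0 t) \<le> M * norm x0) \<or>
      (\<exists>s\<ge>0. s \<ge> t - tau 0 - 2 * \<theta> - \<chi>max \<and> norm (imp_sol T tau (\<lambda>k. app B) x0 t) \<le> M * norm (Z (zf x0) s))"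
  proof -
    fix x0 t assume t: "tau 0 < t"
    obtain k where k: "tau k < t" "t \<le> tau (Suc k)" using exists_interval[OF tau_mono t exT] by blast
    have xe: "imp_sol T tau (\<lambda>k. app B) x0 t = T (t - tau k) (P x0 k)"
      using imp_sol_eq[OF tau_mono k] by (simp add: P_def)
    show "?thesis x0 t"
    proof (cases k)
      case 0
      have "t - tau 0 \<le> \<theta> + 2 * \<chi>max" using k 0 dwell[of 1] \<chi>max by (simp add: abs_le_iff)
      then have "norm (imp_sol T tau (\<lambda>k. app B) x0 t) \<le> M * norm x0"
        using xe 0 TM[of "t - tau 0" x0] t by (simp add: P_def)
      then show ?thesis using k 0 by simp
    next
      case (Suc j)
      define \<rho> where "\<rho> = t - tau (Suc j) + \<sigma> (Suc j)"
      have \<rho>0: "\<rho> > 0" using k Suc \<sigma>b[of "Suc j"] by (simp add: \<rho>_def)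
      have \<rho>1: "\<rho> \<le> \<theta> + \<sigma> (Suc (Suc j))" using k Suc by (simp add: \<rho>_def \<sigma>_def algebra_simps)
      have \<rho>2: "\<rho> \<le> \<theta> + 2 * \<chi>max" using \<rho>1 \<sigma>b[of "Suc (Suc j)"] by simp
      have x\<rho>: "imp_sol T tau (\<lambda>k. app B) x0 t = T \<rho> (Q (zf x0) j)"
        using xe Suc PQ[of x0 j] Tapp[of "t - tau (Suc j)" "\<sigma> (Suc j)"] k \<sigma>b[of "Suc j"]
        by (simp add: \<rho>_def)
      have tj: "t - tau 0 - 2 * \<theta> - \<chi>max \<le> real j * \<theta>"
        using k Suc dwell[of "Suc (Suc j)"] by (simp add: abs_le_iff algebra_simps)
      show ?thesis
      proof (cases "\<rho> \<le> \<theta>")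
        case True
        define s where "s = real j * \<theta> + \<rho>"
        have "Z (zf x0) s = T \<rho> (Q (zf x0) j)"
          using ZQ[of j s "zf x0"] \<rho>0 True by (simp add: s_def algebra_simps)
        then have "norm (imp_sol T tau (\<lambda>k. app B) x0 t) \<le> M * norm (Z (zf x0) s)"
          using x\<rho> M(1) by (simp add: mult_le_cancel_right1)
        moreover have "s \<ge> 0" "s \<ge> t - tau 0 - 2 * \<theta> - \<chi>max"
          using \<rho>0 tj \<theta> by (auto simp: s_def)
        ultimately show ?thesis by blast
      next
        case False
        define s where "s = real (Suc j) * \<theta>"
        have "Z (zf x0) s = T \<theta> (Q (zf x0) j)"
          using ZQ[of j s "zf x0"] \<theta> by (simp add: s_def algebra_simps)
        moreover have "T \<rho> (Q (zf x0) j) = T (\<rho> - \<theta>) (T \<theta> (Q (zf x0) j))"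
          using Tapp[of "\<rho> - \<theta>" \<theta>] False \<theta> by simp
        ultimately have "norm (imp_sol T tau (\<lambda>k. app B) x0 t) \<le> M * norm (Z (zf x0) s)"
          using x\<rho> TM[of "\<rho> - \<theta>"] False \<rho>2 \<chi>max by simp
        moreover have "s \<ge> 0" "s \<ge> t - tau 0 - 2 * \<theta> - \<chi>max"
          using tj \<theta> by (auto simp: s_def algebra_simps)
        ultimately show ?thesis by blast
      qed
    qed
  qed
  have zfbl: "bounded_linear zf"
  proof -
    have "zf = (\<lambda>w. app B (T t0 w) + (\<Sum>m. (\<sigma> (Suc 0) ^ Suc m / fact (Suc m)) *\<^sub>R app (C (Suc m)) (T t0 w)))"
      by (simp add: fun_eq_iff zf_def Jk_def)
    then show ?thesis using JBL[OF conjunct1[OF \<sigma>b[of "Suc 0"]] conjunct2[OF \<sigma>b[of "Suc 0"]]] by simp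
  qed
  define K0 where "K0 = onorm zf + 1"
  have K0: "K0 > 0" using onorm_pos_le[OF zfbl] by (simp add: K0_def)
  have zfn: "\<And>x. norm (zf x) \<le> K0 * norm x"
  proof -
    fix x
    have "norm (zf x) \<le> onorm zf * norm x" using onorm[OF zfbl] .
    also have "\<dots> \<le> K0 * norm x" by (intro mult_right_mono) (auto simp: K0_def)
    finally show "norm (zf x) \<le> K0 * norm x" .
  qed
  have Mp: "M > 0" using M(1) by simp
  show ?thesis
    unfolding asym_stable_def
  proof (intro conjI)
    show "\<forall>\<epsilon>>0. \<exists>\<delta>>0. \<forall>x0\<in>dom A. norm x0 < \<delta> \<longrightarrow> (\<forall>t\<ge>tau 0. norm (imp_sol T tau (\<lambda>k. app B) x0 t) < \<epsilon>)"
    proof (intro allI impI)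
      fix \<epsilon> :: real assume e: "\<epsilon> > 0"
      have e2: "\<epsilon> / (2 * M) > 0" using e Mp by simp
      obtain \<delta>' where d': "\<delta>' > 0" "\<And>z t. norm z < \<delta>' \<Longrightarrow> t \<ge> 0 \<Longrightarrow> norm (Z z t) \<le> \<epsilon> / (2 * M)"
        using ZS[rule_format, OF e2] by blast
      define \<delta> where "\<delta> = min (\<delta>' / K0) (\<epsilon> / (2 * M))"
      have d: "\<delta> > 0" using d'(1) K0 e2 by (simp add: \<delta>_def)
      have hM: "M * (\<epsilon> / (2 * M)) = \<epsilon> / 2" using Mp by simp
      have "norm (imp_sol T tau (\<lambda>k. app B) x0 t) < \<epsilon>"
        if x0: "x0 \<in> dom A" "norm x0 < \<delta>" and t: "t \<ge> tau 0" for x0 t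
      proof (cases "t \<le> tau 0")
        case True
        have "norm x0 < \<epsilon> / (2 * M)" using x0(2) by (simp add: \<delta>_def)
        also have "\<dots> \<le> \<epsilon> / 2" using M(1) e by (simp add: field_simps)
        finally show ?thesis using True e by (simp add: imp_sol_le)
      next
        case False
        then have tt: "tau 0 < t" by simp
        have x0e: "norm x0 < \<epsilon> / (2 * M)" using x0(2) by (simp add: \<delta>_def)
        have x0d: "norm x0 < \<delta>' / K0" using x0(2) by (simp add: \<delta>_def)
        show ?thesis
        proof (cases "t \<le> tau (Suc 0) \<and> norm (imp_sol T tau (\<lambda>k. app B) x0 t) \<le> M * norm x0")
          case True
          have "M * norm x0 \<le> M * (\<epsilon> / (2 * M))" using x0e Mp by (intro mult_left_mono) auto
          then show ?thesis using True hM e by linarith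
        next
          case False
          then obtain s where s: "s \<ge> 0" "norm (imp_sol T tau (\<lambda>k. app B) x0 t) \<le> M * norm (Z (zf x0) s)"
            using KL[OF tt, of x0] by blast
          have "norm (zf x0) \<le> K0 * norm x0" by (rule zfn)
          also have "\<dots> < K0 * (\<delta>' / K0)" using x0d K0 by (intro mult_strict_left_mono) auto
          also have "\<dots> = \<delta>'" using K0 by simp
          finally have "norm (Z (zf x0) s) \<le> \<epsilon> / (2 * M)" using d'(2) s(1) by blast
          then have "M * norm (Z (zf x0) s) \<le> M * (\<epsilon> / (2 * M))" using Mp by (intro mult_left_mono) auto
          then show ?thesis using s(2) hM e by linarith
        qed
      qed
      then show "\<exists>\<delta>>0. \<forall>x0\<in>dom A. norm x0 < \<delta> \<longrightarrow> (\<forall>t\<ge>tau 0. norm (imp_sol T tau (\<lambda>k. app B) x0 t) < \<epsilon>)"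
        using d by blast
    qed
    show "\<forall>x0\<in>dom A. ((\<lambda>t. imp_sol T tau (\<lambda>k. app B) x0 t) \<longlongrightarrow> 0) at_top"
    proof (intro ballI)
      fix x0 assume x0: "x0 \<in> dom A"
      show "((\<lambda>t. imp_sol T tau (\<lambda>k. app B) x0 t) \<longlongrightarrow> 0) at_top"
      proof (rule tendstoI)
        fix \<epsilon> :: real assume e: "\<epsilon> > 0"
        have eM: "\<epsilon> / M > 0" using e Mp by simp
        have "eventually (\<lambda>s. dist (Z (zf x0) s) 0 < \<epsilon> / M) at_top"
          using tendstoD[OF ZA[rule_format, of "zf x0"] eM] .
        then obtain S where S: "\<And>s. s \<ge> S \<Longrightarrow> norm (Z (zf x0) s) < \<epsilon> / M"
          unfolding eventually_at_top_linorder by auto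
        have t01: "tau 0 < tau (Suc 0)" using tau_mono by (simp add: strict_mono_def)
        have "dist (imp_sol T tau (\<lambda>k. app B) x0 t) 0 < \<epsilon>"
          if t: "t \<ge> max (tau (Suc 0) + 1) (S + tau 0 + 2 * \<theta> + \<chi>max)" for t
        proof -
          have tt: "tau 0 < t" using t t01 by simp
          have nt: "\<not> t \<le> tau (Suc 0)" using t by simp
          then obtain s where s: "s \<ge> t - tau 0 - 2 * \<theta> - \<chi>max" "norm (imp_sol T tau (\<lambda>k. app B) x0 t) \<le> M * norm (Z (zf x0) s)"
            using KL[OF tt, of x0] by blast
          have "s \<ge> S" using s(1) t by simp
          then have "M * norm (Z (zf x0) s) < M * (\<epsilon> / M)" using S Mp by (intro mult_strict_left_mono) auto
          then show ?thesis using s(2) Mp by simp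
        qed
        then show "eventually (\<lambda>t. dist (imp_sol T tau (\<lambda>k. app B) x0 t) 0 < \<epsilon>) at_top"
          unfolding eventually_at_top_linorder by blast
      qed
    qed
  qed
qed

end
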